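(* For any $T>0$: $$\Pr[\tau^\downarrow_\gamma\le T]\le T\exp\Big(-\Omega\Big(\frac{n\sqrt{\gamma_0}}{T}\Big)\Big)\ \text{for 3-Majority},\qquad \Pr[\tau^\downarrow_\gamma\le T]\le T\exp\Big(-\Omega\Big(\frac{n}{T+\gamma_0^{-1/2}}\Big)\Big)\ \text{for 2-Choices}.$$ In particular, let $C>0$ be a sufficiently large constant. Suppose $\gamma_0\ge C\log n/\sqrt n$ for 3-Majority, or $\gamma_0\ge(C\log n)^2/n$ for 2-Choices. Then $\Pr[\tau^\downarrow_\gamma\le C\log n/\gamma_0]\le O(n^{-10})$.
   Context: **Setting.** Let $V$ be a set of $n$ vertices and $k\in\{1,\dots,n\}$. A configuration is a map $\mathsf{opn}\colon V\to[k]$. The process is synchronous: each round $t\ge1$ produces $\mathsf{opn}_t$ from $\mathsf{opn}_{t-1}$, and all vertices make their choices independently. **3-Majority.** Each vertex $v$ samples $w_1,w_2,w_3\in V$ independently and uniformly, with replacement. It sets $\mathsf{opn}_t(v)=\mathsf{opn}_{t-1}(w_1)$ if $\mathsf{opn}_{t-1}(w_1)=\mathsf{opn}_{t-1}(w_2)$, and $\mathsf{opn}_t(v)=\mathsf{opn}_{t-1}(w_3)$ otherwise. **2-Choices.** Each vertex $v$ samples $w_1,w_2\in V$ independently and uniformly, with replacement. It sets $\mathsf{opn}_t(v)=\mathsf{opn}_{t-1}(w_1)$ if $\mathsf{opn}_{t-1}(w_1)=\mathsf{opn}_{t-1}(w_2)$, and $\mathsf{opn}_t(v)=\mathsf{opn}_{t-1}(v)$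 otherwise. **Basic quantities.** - $\alpha_t(i)=|\{v:\mathsf{opn}_t(v)=i\}|/n$. - $\gamma_t=\sum_i\alpha_t(i)^2$. **Stopping time.** For a fixed constant $c^\downarrow_\gamma\in(0,1)$, $\tau^\downarrow_\gamma=\inf\{t\ge0:\gamma_t\le(1-c^\downarrow_\gamma)\gamma_0\}$. **Conventions.** $\Omega(\cdot)$ hides positive constants independent of $n$, $k$, $T$ and the configuration. *)

theory Defs
  imports "HOL-Probability.Probability"
begin

text \<open>Vertices are V = {0..<n}; opinions are labels in [k] = {1..k}.
  A configuration is a map nat => nat (values outside V are irrelevant; the
  random step sets them to the default 0).\<close>

type_synonym config = "nat \<Rightarrow> nat"

definition alpha :: "nat \<Rightarrow> config \<Rightarrow> nat \<Rightarrow> real" where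
  "alpha n opn i = real (card {v \<in> {..<n}. opn v = i}) / real n"

definition gamma :: "nat \<Rightarrow> nat \<Rightarrow> config \<Rightarrow> real" where
  "gamma n k opn = (\<Sum>i\<in>{1..k}. (alpha n opn i)\<^sup>2)"

definition unif_vertex :: "nat \<Rightarrow> nat pmf" where
  "unif_vertex n = pmf_of_set {..<n}"

definition three_majority_step :: "nat \<Rightarrow> config \<Rightarrow> config pmf" where
  "three_majority_step n opn =
     Pi_pmf {..<n} 0 (\<lambda>v.
       bind_pmf (unif_vertex n) (\<lambda>w1.
       bind_pmf (unif_vertex n) (\<lambda>w2.
       bind_pmf (unif_vertex n) (\<lambda>w3.
         return_pmf (if opn w1 = opn w2 then opn w1 else opn w3)))))"

definition two_choices_step :: "nat \<Rightarrow> config \<Rightarrow> config pmf" where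
  "two_choices_step n opn =
     Pi_pmf {..<n} 0 (\<lambda>v.
       bind_pmf (unif_vertex n) (\<lambda>w1.
       bind_pmf (unif_vertex n) (\<lambda>w2.
         return_pmf (if opn w1 = opn w2 then opn w1 else opn v))))"

fun trajectory :: "(config \<Rightarrow> config pmf) \<Rightarrow> config \<Rightarrow> nat \<Rightarrow> config list pmf" where
  "trajectory step opn0 0 = return_pmf [opn0]"
| "trajectory step opn0 (Suc t) =
     bind_pmf (trajectory step opn0 t) (\<lambda>xs. map_pmf (\<lambda>y. xs @ [y]) (step (last xs)))"

text \<open>Pr[tau_gamma_down <= T], where
  tau = inf {t >= 0. gamma_t <= (1 - c) * gamma_0}.\<close>
definition prob_tau_le :: "(config \<Rightarrow> config pmf) \<Rightarrow> nat \<Rightarrow> nat \<Rightarrow> real \<Rightarrow> config \<Rightarrow> nat \<Rightarrow> real" where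
  "prob_tau_le step n k c opn0 T =
     measure_pmf.prob (trajectory step opn0 T)
       {xs. \<exists>t\<le>T. gamma n k (xs ! t) \<le> (1 - c) * gamma n k opn0}"

definition valid_config :: "nat \<Rightarrow> nat \<Rightarrow> config \<Rightarrow> bool" where
  "valid_config n k opn \<longleftrightarrow> (\<forall>v<n. opn v \<in> {1..k})"

end

theory Submission
  imports Defs
begin

lemma fiber_sum:
  assumes n: "n > 0" and v: "valid_config n k x"
  shows "(\<Sum>w<n. g (x w)) = real n * (\<Sum>i\<in>{1..k}. alpha n x i * g i)"
proof -
  have "(\<Sum>w<n. g (x w)) = (\<Sum>w<n. \<Sum>i\<in>{1..k}. if x w = i then g i else 0)"
    using v unfolding valid_config_def by (intro sum.cong) (auto simp: sum.delta)
  also have "\<dots> = (\<Sum>i\<in>{1..k}. \<Sum>w<n. if x w = i then g i else 0)"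
    by (rule sum.swap)
  also have "\<dots> = (\<Sum>i\<in>{1..k}. real (card {w\<in>{..<n}. x w = i}) * g i)"
    by (intro sum.cong refl) (simp add: sum.If_cases Int_def conj_commute)
  also have "\<dots> = real n * (\<Sum>i\<in>{1..k}. alpha n x i * g i)"
    using n by (simp add: alpha_def sum_distrib_left)
  finally show ?thesis .
qed

lemma alpha_nonneg: "alpha n x i \<ge> 0"
  by (simp add: alpha_def)

lemma alpha_le1: "alpha n x i \<le> 1"
proof (cases "n = 0")
  case False
  have "card {w\<in>{..<n}. x w = i} \<le> card {..<n}" by (intro card_mono) auto
  then show ?thesis using False by (simp add: alpha_def)
qed (simp add: alpha_def)

lemma alpha_sum1:
  assumes n: "n > 0" and v: "valid_config n k x"
  shows "(\<Sum>i\<in>{1..k}. alpha n x i) = 1"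
  using fiber_sum[OF n v, of "\<lambda>_. 1"] n by simp

lemma gamma_le1:
  assumes n: "n > 0" and v: "valid_config n k x"
  shows "gamma n k x \<le> 1"
proof -
  have "gamma n k x \<le> (\<Sum>i\<in>{1..k}. alpha n x i)"
    unfolding gamma_def power2_eq_square
    by (intro sum_mono) (metis alpha_le1 alpha_nonneg mult_left_le)
  then show ?thesis using alpha_sum1[OF n v] by simp
qed

lemma gamma_nonneg: "gamma n k x \<ge> 0"
  unfolding gamma_def by (intro sum_nonneg) auto

lemma alpha_sq_le_gamma:
  assumes "i \<in> {1..k}"
  shows "(alpha n x i)\<^sup>2 \<le> gamma n k x"
  unfolding gamma_def using assms by (intro member_le_sum) auto

lemma alpha_le_sqrt_gamma:
  assumes "i \<in> {1..k}"
  shows "alpha n x i \<le> sqrt (gamma n k x)"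
  using alpha_sq_le_gamma[OF assms] alpha_nonneg real_le_rsqrt by blast

lemma gamma_pos:
  assumes n: "n > 0" and v: "valid_config n k x"
  shows "gamma n k x > 0"
proof -
  have i: "x 0 \<in> {1..k}" using v n unfolding valid_config_def by auto
  have "card {w\<in>{..<n}. x w = x 0} > 0"
    using n by (subst card_gt_0_iff) auto
  then have "alpha n x (x 0) > 0" using n by (simp add: alpha_def)
  then have "(alpha n x (x 0))\<^sup>2 > 0" by simp
  then show ?thesis using alpha_sq_le_gamma[OF i, of n x] by linarith
qed

lemma sum_cube_ge:
  assumes n: "n > 0" and v: "valid_config n k x"
  shows "(\<Sum>i\<in>{1..k}. alpha n x i ^ 3) \<ge> (gamma n k x)\<^sup>2"
proof -
  let ?g = "gamma n k x"
  have "0 \<le> (\<Sum>i\<in>{1..k}. alpha n x i * (alpha n x i - ?g)\<^sup>2)"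
    by (intro sum_nonneg mult_nonneg_nonneg alpha_nonneg) auto
  also have "\<dots> = (\<Sum>i\<in>{1..k}. alpha n x i ^ 3) - 2 * ?g * (\<Sum>i\<in>{1..k}. (alpha n x i)\<^sup>2)
                 + ?g\<^sup>2 * (\<Sum>i\<in>{1..k}. alpha n x i)"
    by (simp add: sum_subtractf sum.distrib sum_distrib_left power2_eq_square power3_eq_cube algebra_simps)
  also have "\<dots> = (\<Sum>i\<in>{1..k}. alpha n x i ^ 3) - ?g\<^sup>2"
    using alpha_sum1[OF n v] by (simp add: gamma_def power2_eq_square)
  finally show ?thesis by simp
qed

lemma pair_fiber_sum:
  assumes n: "n > 0" and v: "valid_config n k x"
  shows "(\<Sum>w1<n. \<Sum>w2<n. if x w1 = x w2 then g (x w1) else 0)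
       = (real n)\<^sup>2 * (\<Sum>i\<in>{1..k}. (alpha n x i)\<^sup>2 * g i)"
proof -
  have "(\<Sum>w2<n. if x w1 = x w2 then g (x w1) else 0) = real n * (alpha n x (x w1) * g (x w1))"
    if "w1 < n" for w1
  proof -
    have xi: "x w1 \<in> {1..k}" using v that unfolding valid_config_def by auto
    have "(\<Sum>w2<n. if x w1 = x w2 then g (x w1) else 0)
        = real n * (\<Sum>i\<in>{1..k}. alpha n x i * (if x w1 = i then g (x w1) else 0))"
      using fiber_sum[OF n v, of "\<lambda>i. if x w1 = i then g (x w1) else 0"] by simp
    also have "\<dots> = real n * (alpha n x (x w1) * g (x w1))"
      using xi by (simp add: if_distrib sum.delta cong: if_cong)
    finally show ?thesis .
  qed
  then have "(\<Sum>w1<n. \<Sum>w2<n. if x w1 = x w2 then g (x w1) else 0)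
      = (\<Sum>w1<n. real n * (alpha n x (x w1) * g (x w1)))" by (intro sum.cong) auto
  also have "\<dots> = real n * (real n * (\<Sum>i\<in>{1..k}. alpha n x i * (alpha n x i * g i)))"
    using fiber_sum[OF n v, of "\<lambda>i. alpha n x i * g i"] by (simp add: sum_distrib_left[symmetric])
  finally show ?thesis by (simp add: power2_eq_square mult.assoc)
qed

lemma cs_alpha:
  assumes n: "n > 0" and v': "valid_config n k y"
  shows "(\<Sum>w<n. alpha n x (y w)) / real n \<le> sqrt (gamma n k x) * sqrt (gamma n k y)"
proof -
  have "(\<Sum>w<n. alpha n x (y w)) / real n = (\<Sum>i\<in>{1..k}. alpha n y i * alpha n x i)"
    using fiber_sum[OF n v', of "alpha n x"] n by simp
  also have "\<dots> \<le> sqrt (gamma n k y) * sqrt (gamma n k x)"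
  proof -
    have "(\<Sum>i\<in>{1..k}. alpha n y i * alpha n x i)\<^sup>2 \<le> gamma n k y * gamma n k x"
      unfolding gamma_def by (rule Cauchy_Schwarz_ineq_sum)
    then show ?thesis
      by (metis gamma_nonneg real_le_rsqrt real_sqrt_mult)
  qed
  finally show ?thesis by (simp add: mult.commute)
qed

definition X3 :: "nat \<Rightarrow> config \<Rightarrow> nat pmf" where
  "X3 n opn = bind_pmf (unif_vertex n) (\<lambda>w1.
       bind_pmf (unif_vertex n) (\<lambda>w2.
       bind_pmf (unif_vertex n) (\<lambda>w3.
         return_pmf (if opn w1 = opn w2 then opn w1 else opn w3))))"

definition X2 :: "nat \<Rightarrow> config \<Rightarrow> nat \<Rightarrow> nat pmf" where
  "X2 n opn v = bind_pmf (unif_vertex n) (\<lambda>w1.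
       bind_pmf (unif_vertex n) (\<lambda>w2.
         return_pmf (if opn w1 = opn w2 then opn w1 else opn v)))"

lemma three_majority_step_X3: "three_majority_step n opn = Pi_pmf {..<n} 0 (\<lambda>v. X3 n opn)"
  unfolding three_majority_step_def X3_def ..

lemma two_choices_step_X2: "two_choices_step n opn = Pi_pmf {..<n} 0 (\<lambda>v. X2 n opn v)"
  unfolding two_choices_step_def X2_def ..

lemma set_X3:
  assumes "n > 0" "valid_config n k x"
  shows "set_pmf (X3 n x) \<subseteq> {1..k}"
  using assms unfolding X3_def unif_vertex_def valid_config_def
  by (auto simp: lessThan_empty_iff)

lemma set_X2:
  assumes "n > 0" "valid_config n k x" "v < n"
  shows "set_pmf (X2 n x v) \<subseteq> {1..k}"
  using assms unfolding X2_def unif_vertex_def valid_config_def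
  by (auto simp: lessThan_empty_iff)

lemma E_unif_bind:
  assumes "n > 0" "\<And>w. finite (set_pmf (f w))"
  shows "measure_pmf.expectation (bind_pmf (unif_vertex n) f) (h::_\<Rightarrow>real) =
         (\<Sum>w<n. measure_pmf.expectation (f w) h) / real n"
  unfolding unif_vertex_def using assms
  by (subst pmf_expectation_bind_pmf_of_set) (auto simp: sum_divide_distrib divide_inverse mult.commute sum_distrib_left)

lemma finite_set_unif_bind:
  assumes "n > 0" "\<And>w. finite (set_pmf (f w))"
  shows "finite (set_pmf (bind_pmf (unif_vertex n) f))"
  unfolding unif_vertex_def using assms by (auto simp: lessThan_empty_iff)

lemma E_X3:
  assumes n: "n > 0" and v: "valid_config n k x"
  shows "measure_pmf.expectation (X3 n x) g =
     (\<Sum>i\<in>{1..k}. (alpha n x i)\<^sup>2 * g i) + (1 - gamma n k x) * (\<Sum>i\<in>{1..k}. alpha n x i * g i)"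
proof -
  define A where "A = (\<Sum>i\<in>{1..k}. alpha n x i * g i)"
  have nz: "real n \<noteq> 0" using n by simp
  have "measure_pmf.expectation (X3 n x) g =
      (\<Sum>w1<n. (\<Sum>w2<n. (\<Sum>w3<n. g (if x w1 = x w2 then x w1 else x w3)) / real n) / real n) / real n"
  proof -
    have f1: "finite (set_pmf (bind_pmf (unif_vertex n) (\<lambda>w3. return_pmf (if x w1 = x w2 then x w1 else x w3))))" for w1 w2
      by (rule finite_set_unif_bind[OF n]) simp
    have f2: "finite (set_pmf (bind_pmf (unif_vertex n) (\<lambda>w2. bind_pmf (unif_vertex n) (\<lambda>w3. return_pmf (if x w1 = x w2 then x w1 else x w3)))))" for w1
      by (rule finite_set_unif_bind[OF n f1])
    have f3: "finite (set_pmf (return_pmf (if x w1 = x w2 then x w1 else x w3)))" for w1 w2 w3 by simp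
    show ?thesis unfolding X3_def
      apply (subst E_unif_bind[OF n f2])
      apply (subst E_unif_bind[OF n f1])
      apply (subst E_unif_bind[OF n f3])
      by simp
  qed
  also have "\<dots> = (\<Sum>w1<n. (\<Sum>w2<n. (if x w1 = x w2 then g (x w1) else A)) / real n) / real n"
  proof -
    have "(\<Sum>w3<n. g (if x w1 = x w2 then x w1 else x w3)) / real n = (if x w1 = x w2 then g (x w1) else A)" for w1 w2
      using fiber_sum[OF n v, of g] nz by (auto simp: A_def)
    then show ?thesis by simp
  qed
  also have "\<dots> = (\<Sum>w1<n. \<Sum>w2<n. (if x w1 = x w2 then g (x w1) - A else 0) + A) / (real n)\<^sup>2"
    by (auto simp add: sum_divide_distrib power2_eq_square intro!: sum.cong)
  also have "\<dots> = ((real n)\<^sup>2 * (\<Sum>i\<in>{1..k}. (alpha n x i)\<^sup>2 * (g i - A)) + (real n)\<^sup>2 * A) / (real n)\<^sup>2"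
    by (simp add: sum.distrib pair_fiber_sum[OF n v, of "\<lambda>j. g j - A"] power2_eq_square)
  also have "\<dots> = (\<Sum>i\<in>{1..k}. (alpha n x i)\<^sup>2 * (g i - A)) + A"
    using nz by (simp add: field_simps)
  also have "\<dots> = (\<Sum>i\<in>{1..k}. (alpha n x i)\<^sup>2 * g i) + (1 - gamma n k x) * A"
    by (simp add: right_diff_distrib sum_subtractf gamma_def sum_distrib_left algebra_simps)
  finally show ?thesis by (simp add: A_def)
qed

lemma E_X2:
  assumes n: "n > 0" and v: "valid_config n k x" and vn: "v < n"
  shows "measure_pmf.expectation (X2 n x v) g =
     (\<Sum>i\<in>{1..k}. (alpha n x i)\<^sup>2 * g i) + (1 - gamma n k x) * g (x v)"
proof -
  define A where "A = g (x v)"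
  have nz: "real n \<noteq> 0" using n by simp
  have "measure_pmf.expectation (X2 n x v) g =
      (\<Sum>w1<n. (\<Sum>w2<n. g (if x w1 = x w2 then x w1 else x v)) / real n) / real n"
  proof -
    have f1: "finite (set_pmf (bind_pmf (unif_vertex n) (\<lambda>w2. return_pmf (if x w1 = x w2 then x w1 else x v))))" for w1
      by (rule finite_set_unif_bind[OF n]) simp
    have f3: "finite (set_pmf (return_pmf (if x w1 = x w2 then x w1 else x v)))" for w1 w2 by simp
    show ?thesis unfolding X2_def
      apply (subst E_unif_bind[OF n f1])
      apply (subst E_unif_bind[OF n f3])
      by simp
  qed
  also have "\<dots> = (\<Sum>w1<n. \<Sum>w2<n. (if x w1 = x w2 then g (x w1) - A else 0) + A) / (real n)\<^sup>2"
    by (auto simp add: sum_divide_distrib power2_eq_square A_def intro!: sum.cong)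
  also have "\<dots> = ((real n)\<^sup>2 * (\<Sum>i\<in>{1..k}. (alpha n x i)\<^sup>2 * (g i - A)) + (real n)\<^sup>2 * A) / (real n)\<^sup>2"
    by (simp add: sum.distrib pair_fiber_sum[OF n v, of "\<lambda>j. g j - A"] power2_eq_square)
  also have "\<dots> = (\<Sum>i\<in>{1..k}. (alpha n x i)\<^sup>2 * (g i - A)) + A"
    using nz by (simp add: field_simps)
  also have "\<dots> = (\<Sum>i\<in>{1..k}. (alpha n x i)\<^sup>2 * g i) + (1 - gamma n k x) * A"
    by (simp add: right_diff_distrib sum_subtractf gamma_def sum_distrib_left algebra_simps)
  finally show ?thesis by (simp add: A_def)
qed

lemma exp_quad:
  fixes z :: real
  assumes "\<bar>z\<bar> \<le> 1"
  shows "exp z \<le> 1 + z + z\<^sup>2"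
proof (cases "z \<ge> 0")
  case True
  then show ?thesis using exp_bound[of z] assms by simp
next
  case False
  define y where "y = - z"
  have y: "y \<ge> 0" using False y_def by simp
  have l: "1 + y + y\<^sup>2 / 2 \<le> exp y" by (rule exp_lower_Taylor_quadratic[OF y])
  have pos: "0 < 1 + y + y\<^sup>2 / 2" using y by (simp add: add_pos_nonneg)
  have "exp z = 1 / exp y" by (simp add: y_def exp_minus field_simps)
  also have "\<dots> \<le> 1 / (1 + y + y\<^sup>2 / 2)"
    using l pos by (intro divide_left_mono) auto
  also have "\<dots> \<le> 1 - y + y\<^sup>2 / 2"
  proof -
    have "(1 + y + y\<^sup>2 / 2) * (1 - y + y\<^sup>2 / 2) = 1 + y ^ 4 / 4"
      by (simp add: algebra_simps power2_eq_square power4_eq_xxxx)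
    also have "\<dots> \<ge> 1" by simp
    finally show ?thesis using pos by (simp add: divide_simps mult.commute)
  qed
  also have "\<dots> \<le> 1 + z + z\<^sup>2" by (simp add: y_def)
  finally show ?thesis .
qed

lemma mgf_vertex:
  fixes X :: "'a pmf" and f :: "'a \<Rightarrow> real"
  assumes fin: "finite (set_pmf X)"
    and bnd: "\<And>y. y \<in> set_pmf X \<Longrightarrow> \<bar>\<psi> * (f y - a)\<bar> \<le> 1"
  shows "measure_pmf.expectation X (\<lambda>y. exp (- \<psi> * f y))
     \<le> exp (- \<psi> * measure_pmf.expectation X f + \<psi>\<^sup>2 * measure_pmf.expectation X (\<lambda>y. (f y - a)\<^sup>2))"
proof -
  note int = integrable_measure_pmf_finite[OF fin]
  have pw: "exp (- \<psi> * f y) \<le> exp (- \<psi> * a) * (1 - \<psi> * (f y - a) + \<psi>\<^sup>2 * (f y - a)\<^sup>2)"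
    if "y \<in> set_pmf X" for y
  proof -
    have e: "exp (- \<psi> * f y) = exp (- \<psi> * a) * exp (- (\<psi> * (f y - a)))"
      by (simp add: mult_exp_exp algebra_simps)
    have q0: "exp (- (\<psi> * (f y - a))) \<le> 1 + (- (\<psi> * (f y - a))) + (- (\<psi> * (f y - a)))\<^sup>2"
      using bnd[OF that] by (intro exp_quad) simp
    have q: "exp (- (\<psi> * (f y - a))) \<le> 1 - \<psi> * (f y - a) + \<psi>\<^sup>2 * (f y - a)\<^sup>2"
      using q0 by (simp add: power_mult_distrib)
    show ?thesis unfolding e by (rule mult_left_mono[OF q]) simp
  qed
  have "measure_pmf.expectation X (\<lambda>y. exp (- \<psi> * f y))
      \<le> measure_pmf.expectation X (\<lambda>y. exp (- \<psi> * a) * (1 - \<psi> * (f y - a) + \<psi>\<^sup>2 * (f y - a)\<^sup>2))"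
    by (intro integral_mono_AE int AE_pmfI pw)
  also have "\<dots> = exp (- \<psi> * a) * (1 - \<psi> * (measure_pmf.expectation X f - a)
        + \<psi>\<^sup>2 * measure_pmf.expectation X (\<lambda>y. (f y - a)\<^sup>2))"
    by (simp add: int algebra_simps)
  also have "\<dots> \<le> exp (- \<psi> * a) * exp (- \<psi> * (measure_pmf.expectation X f - a)
        + \<psi>\<^sup>2 * measure_pmf.expectation X (\<lambda>y. (f y - a)\<^sup>2))"
    by (intro mult_left_mono) (auto simp: order_trans[OF _ exp_ge_add_one_self])
  also have "\<dots> = exp (- \<psi> * measure_pmf.expectation X f + \<psi>\<^sup>2 * measure_pmf.expectation X (\<lambda>y. (f y - a)\<^sup>2))"
    by (simp add: mult_exp_exp algebra_simps)
  finally show ?thesis .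
qed

lemma valid_Pi:
  assumes n: "n > 0" and sub: "\<And>v. v < n \<Longrightarrow> set_pmf (X v) \<subseteq> {1..k}"
    and y: "y \<in> set_pmf (Pi_pmf {..<n} 0 X)"
  shows "valid_config n k y"
proof -
  have "y v \<in> set_pmf (X v)" if "v < n" for v using y that by (auto simp: set_Pi_pmf PiE_dflt_def)
  then show ?thesis using sub unfolding valid_config_def by blast
qed

lemma finite_set_Pi:
  fixes X :: "nat \<Rightarrow> nat pmf" and n k :: nat
  assumes sub: "\<And>v. v < n \<Longrightarrow> set_pmf (X v) \<subseteq> {1..k}"
  shows "finite (set_pmf (Pi_pmf {..<n} (0::nat) X))"
proof (subst set_Pi_pmf, simp, rule finite_PiE_dflt)
  fix v assume "v \<in> {..<n}"
  then show "finite ((set_pmf \<circ> X) v)" using finite_subset[OF sub] by auto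
qed simp

lemma one_step:
  fixes X :: "nat \<Rightarrow> nat pmf" and a :: "nat \<Rightarrow> real"
  assumes n: "n > 0" and v: "valid_config n k x"
    and sub: "\<And>v. v < n \<Longrightarrow> set_pmf (X v) \<subseteq> {1..k}"
    and th: "\<theta> \<ge> 0"
    and bnd: "\<And>v y. v < n \<Longrightarrow> y \<in> set_pmf (X v) \<Longrightarrow>
                \<bar>(\<theta> / (real n * sqrt (gamma n k x))) * (alpha n x y - a v)\<bar> \<le> 1"
    and mean: "(\<Sum>v<n. measure_pmf.expectation (X v) (alpha n x)) \<ge> real n * gamma n k x"
    and var: "(\<Sum>v<n. measure_pmf.expectation (X v) (\<lambda>y. (alpha n x y - a v)\<^sup>2)) \<le> V"
  shows "measure_pmf.expectation (Pi_pmf {..<n} 0 X) (\<lambda>y. exp (- \<theta> * sqrt (gamma n k y)))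
     \<le> exp (- \<theta> * sqrt (gamma n k x) + (\<theta> / (real n * sqrt (gamma n k x)))\<^sup>2 * V)"
proof -
  define S where "S = sqrt (gamma n k x)"
  define \<psi> where "\<psi> = \<theta> / (real n * S)"
  have Spos: "S > 0" using gamma_pos[OF n v] by (simp add: S_def)
  have psi: "\<psi> \<ge> 0" using th Spos by (simp add: \<psi>_def)
  let ?P = "Pi_pmf {..<n} (0::nat) X"
  have finP: "finite (set_pmf ?P)" by (rule finite_set_Pi[OF sub])
  have finX: "finite (set_pmf (X v))" if "v < n" for v using sub[OF that] finite_subset by blast
  have pw: "exp (- \<theta> * sqrt (gamma n k y)) \<le> (\<Prod>v<n. exp (- \<psi> * alpha n x (y v)))"
    if y: "y \<in> set_pmf ?P" for y
  proof -
    have vy: "valid_config n k y" by (rule valid_Pi[OF n sub y])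
    have cs: "(\<Sum>w<n. alpha n x (y w)) / real n \<le> S * sqrt (gamma n k y)"
      using cs_alpha[OF n vy, of x] by (simp add: S_def)
    have "\<psi> * (\<Sum>w<n. alpha n x (y w)) = \<theta> / S * ((\<Sum>w<n. alpha n x (y w)) / real n)"
      by (simp add: \<psi>_def)
    also have "\<dots> \<le> \<theta> / S * (S * sqrt (gamma n k y))"
      using th Spos by (intro mult_left_mono cs) auto
    also have "\<dots> = \<theta> * sqrt (gamma n k y)" using Spos by simp
    finally have "\<psi> * (\<Sum>w<n. alpha n x (y w)) \<le> \<theta> * sqrt (gamma n k y)" .
    then have "exp (- \<theta> * sqrt (gamma n k y)) \<le> exp (- (\<psi> * (\<Sum>w<n. alpha n x (y w))))"
      by simp
    also have "\<dots> = (\<Prod>v<n. exp (- \<psi> * alpha n x (y v)))"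
      by (simp add: exp_sum[symmetric] sum_distrib_left sum_negf)
    finally show ?thesis .
  qed
  have "measure_pmf.expectation ?P (\<lambda>y. exp (- \<theta> * sqrt (gamma n k y)))
      \<le> measure_pmf.expectation ?P (\<lambda>y. \<Prod>v<n. exp (- \<psi> * alpha n x (y v)))"
    by (intro integral_mono_AE integrable_measure_pmf_finite[OF finP] AE_pmfI pw)
  also have "\<dots> = (\<Prod>v<n. measure_pmf.expectation (X v) (\<lambda>z. exp (- \<psi> * alpha n x z)))"
    by (rule expectation_prod_Pi_pmf) (auto intro: integrable_measure_pmf_finite finX)
  also have "\<dots> \<le> (\<Prod>v<n. exp (- \<psi> * measure_pmf.expectation (X v) (alpha n x)
        + \<psi>\<^sup>2 * measure_pmf.expectation (X v) (\<lambda>y. (alpha n x y - a v)\<^sup>2)))"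
  proof (intro prod_mono conjI)
    fix v assume "v \<in> {..<n}"
    then have vn: "v < n" by simp
    show "0 \<le> measure_pmf.expectation (X v) (\<lambda>z. exp (- \<psi> * alpha n x z))"
      by (intro integral_nonneg_AE AE_pmfI) simp
    show "measure_pmf.expectation (X v) (\<lambda>z. exp (- \<psi> * alpha n x z))
       \<le> exp (- \<psi> * measure_pmf.expectation (X v) (alpha n x)
        + \<psi>\<^sup>2 * measure_pmf.expectation (X v) (\<lambda>y. (alpha n x y - a v)\<^sup>2))"
      using mgf_vertex[OF finX[OF vn], of \<psi> "alpha n x" "a v"] bnd[OF vn]
      by (simp add: \<psi>_def S_def)
  qed
  also have "\<dots> = exp (- \<psi> * (\<Sum>v<n. measure_pmf.expectation (X v) (alpha n x))
        + \<psi>\<^sup>2 * (\<Sum>v<n. measure_pmf.expectation (X v) (\<lambda>y. (alpha n x y - a v)\<^sup>2)))"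
  proof -
    have "(\<Sum>v<n. - \<psi> * measure_pmf.expectation (X v) (alpha n x)
        + \<psi>\<^sup>2 * measure_pmf.expectation (X v) (\<lambda>y. (alpha n x y - a v)\<^sup>2)) =
        - \<psi> * (\<Sum>v<n. measure_pmf.expectation (X v) (alpha n x))
        + \<psi>\<^sup>2 * (\<Sum>v<n. measure_pmf.expectation (X v) (\<lambda>y. (alpha n x y - a v)\<^sup>2))"
      by (simp add: sum.distrib sum_distrib_left sum_subtractf sum_negf)
    then show ?thesis by (simp add: exp_sum[symmetric])
  qed
  also have "\<dots> \<le> exp (- \<psi> * (real n * gamma n k x) + \<psi>\<^sup>2 * V)"
  proof -
    have "- \<psi> * (\<Sum>v<n. measure_pmf.expectation (X v) (alpha n x)) \<le> - \<psi> * (real n * gamma n k x)"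
      using mean psi by (simp add: mult_left_mono)
    moreover have "\<psi>\<^sup>2 * (\<Sum>v<n. measure_pmf.expectation (X v) (\<lambda>y. (alpha n x y - a v)\<^sup>2)) \<le> \<psi>\<^sup>2 * V"
      using var by (intro mult_left_mono) auto
    ultimately show ?thesis by simp
  qed
  also have "- \<psi> * (real n * gamma n k x) = - \<theta> * S"
  proof -
    have "gamma n k x = S * S" using gamma_nonneg by (simp add: S_def)
    then show ?thesis using n Spos by (simp add: \<psi>_def field_simps)
  qed
  finally show ?thesis by (simp add: \<psi>_def S_def)
qed

lemma alpha_le_S: "i \<in> {1..k} \<Longrightarrow> alpha n x i \<le> sqrt (gamma n k x)"
  by (rule alpha_le_sqrt_gamma)

lemma step3:
  assumes n: "n > 0" and v: "valid_config n k x" and th: "0 \<le> \<theta>" "\<theta> \<le> real n"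
  shows "measure_pmf.expectation (three_majority_step n x) (\<lambda>y. exp (- \<theta> * sqrt (gamma n k y)))
     \<le> exp (- \<theta> * sqrt (gamma n k x) + \<theta>\<^sup>2 * (2 * sqrt (gamma n k x) / real n))"
proof -
  define S where "S = sqrt (gamma n k x)"
  define g where "g = gamma n k x"
  have gpos: "g > 0" using gamma_pos[OF n v] by (simp add: g_def)
  have Spos: "S > 0" using gpos by (simp add: S_def g_def)
  have g1: "g \<le> 1" using gamma_le1[OF n v] by (simp add: g_def)
  have gS: "g = S * S" using gpos by (simp add: S_def g_def)
  have aS: "alpha n x i \<le> S" if "i \<in> {1..k}" for i using alpha_le_S[OF that] by (simp add: S_def)
  have sub: "set_pmf (X3 n x) \<subseteq> {1..k}" by (rule set_X3[OF n v])
  have "measure_pmf.expectation (Pi_pmf {..<n} 0 (\<lambda>v. X3 n x)) (\<lambda>y. exp (- \<theta> * sqrt (gamma n k y)))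
     \<le> exp (- \<theta> * sqrt (gamma n k x) + (\<theta> / (real n * sqrt (gamma n k x)))\<^sup>2 * (real n * (2 * S * g)))"
  proof (rule one_step[OF n v, where a = "\<lambda>_. 0"])
    show "set_pmf (X3 n x) \<subseteq> {1..k}" for v by (rule sub)
    show "0 \<le> \<theta>" by (rule th)
    fix v y assume "v < n" "y \<in> set_pmf (X3 n x)"
    then have y: "y \<in> {1..k}" using sub by blast
    have "\<bar>\<theta> / (real n * S) * (alpha n x y - 0)\<bar> = \<theta> / (real n * S) * alpha n x y"
      using th Spos n by (simp add: alpha_nonneg)
    also have "\<dots> \<le> \<theta> / (real n * S) * S"
      using th Spos n aS[OF y] by (intro mult_left_mono) auto
    also have "\<dots> \<le> 1" using th Spos n by simp
    finally show "\<bar>\<theta> / (real n * sqrt (gamma n k x)) * (alpha n x y - 0)\<bar> \<le> 1" by (simp add: S_def)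
  next
    have "measure_pmf.expectation (X3 n x) (alpha n x) = (\<Sum>i\<in>{1..k}. alpha n x i ^ 3) + (1 - g) * g"
      by (simp add: E_X3[OF n v] g_def gamma_def power2_eq_square power3_eq_cube)
    also have "\<dots> \<ge> g" using sum_cube_ge[OF n v] g1 by (simp add: g_def power2_eq_square algebra_simps)
    finally show "(\<Sum>v<n. measure_pmf.expectation (X3 n x) (alpha n x)) \<ge> real n * gamma n k x"
      by (simp add: g_def) (metis mult_left_mono of_nat_0_le_iff)
  next
    have "measure_pmf.expectation (X3 n x) (\<lambda>y. (alpha n x y - 0)\<^sup>2)
        = (\<Sum>i\<in>{1..k}. (alpha n x i)\<^sup>2 * (alpha n x i)\<^sup>2) + (1 - g) * (\<Sum>i\<in>{1..k}. alpha n x i * (alpha n x i)\<^sup>2)"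
      by (simp add: E_X3[OF n v] g_def)
    also have "\<dots> \<le> (\<Sum>i\<in>{1..k}. (alpha n x i)\<^sup>2 * S) + (1 - g) * (\<Sum>i\<in>{1..k}. alpha n x i * (alpha n x i * S))"
    proof -
      have t1: "(alpha n x i)\<^sup>2 * (alpha n x i)\<^sup>2 \<le> (alpha n x i)\<^sup>2 * S"
        and t2: "alpha n x i * (alpha n x i)\<^sup>2 \<le> alpha n x i * (alpha n x i * S)" if i: "i \<in> {1..k}" for i
      proof -
        have a0: "0 \<le> alpha n x i" by (rule alpha_nonneg)
        have a1: "alpha n x i \<le> 1" by (rule alpha_le1)
        have "alpha n x i * alpha n x i \<le> 1 * alpha n x i" using a0 a1 by (intro mult_right_mono) auto
        then have "(alpha n x i)\<^sup>2 \<le> S" using aS[OF i] by (simp add: power2_eq_square)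
        then show "(alpha n x i)\<^sup>2 * (alpha n x i)\<^sup>2 \<le> (alpha n x i)\<^sup>2 * S"
          by (intro mult_left_mono) auto
        show "alpha n x i * (alpha n x i)\<^sup>2 \<le> alpha n x i * (alpha n x i * S)"
          using aS[OF i] a0 by (simp add: power2_eq_square mult_left_mono)
      qed
      have "(\<Sum>i\<in>{1..k}. (alpha n x i)\<^sup>2 * (alpha n x i)\<^sup>2) \<le> (\<Sum>i\<in>{1..k}. (alpha n x i)\<^sup>2 * S)"
        by (intro sum_mono t1)
      moreover have "(\<Sum>i\<in>{1..k}. alpha n x i * (alpha n x i)\<^sup>2) \<le> (\<Sum>i\<in>{1..k}. alpha n x i * (alpha n x i * S))"
        by (intro sum_mono t2)
      ultimately show ?thesis using g1 by (intro add_mono mult_left_mono) auto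
    qed
    also have "\<dots> = S * g + (1 - g) * (S * g)"
      by (simp add: gamma_def g_def sum_distrib_left sum_distrib_right power2_eq_square algebra_simps)
    also have "\<dots> \<le> 2 * S * g" using g1 gpos Spos by (simp add: algebra_simps mult_left_le)
    finally show "(\<Sum>v<n. measure_pmf.expectation (X3 n x) (\<lambda>y. (alpha n x y - 0)\<^sup>2)) \<le> real n * (2 * S * g)"
      using n by (simp add: mult_left_mono)
  qed
  also have "(\<theta> / (real n * sqrt (gamma n k x)))\<^sup>2 * (real n * (2 * S * g)) = \<theta>\<^sup>2 * (2 * S / real n)"
    using n Spos gS by (simp add: S_def[symmetric] power2_eq_square field_simps)
  finally show ?thesis by (simp add: three_majority_step_X3 S_def)
qed

lemma step2:
  assumes n: "n > 0" and v: "valid_config n k x" and th: "0 \<le> \<theta>" "\<theta> \<le> real n"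
  shows "measure_pmf.expectation (two_choices_step n x) (\<lambda>y. exp (- \<theta> * sqrt (gamma n k y)))
     \<le> exp (- \<theta> * sqrt (gamma n k x) + \<theta>\<^sup>2 * ((sqrt (gamma n k x))\<^sup>2 / real n))"
proof -
  define S where "S = sqrt (gamma n k x)"
  define g where "g = gamma n k x"
  have gpos: "g > 0" using gamma_pos[OF n v] by (simp add: g_def)
  have Spos: "S > 0" using gpos by (simp add: S_def g_def)
  have g1: "g \<le> 1" using gamma_le1[OF n v] by (simp add: g_def)
  have gS: "g = S * S" using gpos by (simp add: S_def g_def)
  have aS: "alpha n x i \<le> S" if "i \<in> {1..k}" for i using alpha_le_S[OF that] by (simp add: S_def)
  have xv: "x w \<in> {1..k}" if "w < n" for w using v that unfolding valid_config_def by blast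
  have diff: "\<bar>alpha n x i - alpha n x j\<bar> \<le> S" if "i \<in> {1..k}" "j \<in> {1..k}" for i j
    using aS[OF that(1)] aS[OF that(2)] alpha_nonneg[of n x i] alpha_nonneg[of n x j] by linarith
  have "measure_pmf.expectation (Pi_pmf {..<n} 0 (X2 n x)) (\<lambda>y. exp (- \<theta> * sqrt (gamma n k y)))
     \<le> exp (- \<theta> * sqrt (gamma n k x) + (\<theta> / (real n * sqrt (gamma n k x)))\<^sup>2 * (real n * g\<^sup>2))"
  proof (rule one_step[OF n v, where a = "\<lambda>v. alpha n x (x v)"])
    show "set_pmf (X2 n x v) \<subseteq> {1..k}" if "v < n" for v by (rule set_X2[OF n v that])
    show "0 \<le> \<theta>" by (rule th)
    fix v y assume vn: "v < n" and "y \<in> set_pmf (X2 n x v)"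
    then have y: "y \<in> {1..k}" using set_X2[OF n v vn] by blast
    have "\<bar>\<theta> / (real n * S) * (alpha n x y - alpha n x (x v))\<bar> = \<theta> / (real n * S) * \<bar>alpha n x y - alpha n x (x v)\<bar>"
      using th Spos n by (simp add: abs_mult)
    also have "\<dots> \<le> \<theta> / (real n * S) * S"
      using th Spos n diff[OF y xv[OF vn]] by (intro mult_left_mono) auto
    also have "\<dots> \<le> 1" using th Spos n by simp
    finally show "\<bar>\<theta> / (real n * sqrt (gamma n k x)) * (alpha n x y - alpha n x (x v))\<bar> \<le> 1" by (simp add: S_def)
  next
    have "(\<Sum>v<n. measure_pmf.expectation (X2 n x v) (alpha n x))
        = (\<Sum>v<n. (\<Sum>i\<in>{1..k}. alpha n x i ^ 3) + (1 - g) * alpha n x (x v))"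
      by (intro sum.cong refl) (simp add: E_X2[OF n v] g_def power2_eq_square power3_eq_cube)
    also have "\<dots> = real n * ((\<Sum>i\<in>{1..k}. alpha n x i ^ 3) + (1 - g) * g)"
    proof -
      have s1: "(\<Sum>v<n. alpha n x (x v)) = real n * g"
        using fiber_sum[OF n v, of "alpha n x"] by (simp add: g_def gamma_def power2_eq_square)
      show ?thesis by (simp only: sum.distrib sum_distrib_left[symmetric] s1) (simp add: algebra_simps)
    qed
    also have "\<dots> \<ge> real n * g" using sum_cube_ge[OF n v] g1
      by (intro mult_left_mono) (auto simp: g_def power2_eq_square algebra_simps)
    finally show "(\<Sum>v<n. measure_pmf.expectation (X2 n x v) (alpha n x)) \<ge> real n * gamma n k x"
      by (simp add: g_def)
  next
    have "measure_pmf.expectation (X2 n x v) (\<lambda>y. (alpha n x y - alpha n x (x v))\<^sup>2) \<le> g\<^sup>2" if vn: "v < n" for v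
    proof -
      have "measure_pmf.expectation (X2 n x v) (\<lambda>y. (alpha n x y - alpha n x (x v))\<^sup>2)
          = (\<Sum>i\<in>{1..k}. (alpha n x i)\<^sup>2 * (alpha n x i - alpha n x (x v))\<^sup>2)"
        by (simp add: E_X2[OF n v vn])
      also have "\<dots> \<le> (\<Sum>i\<in>{1..k}. (alpha n x i)\<^sup>2 * g)"
      proof (intro sum_mono mult_left_mono)
        fix i assume i: "i \<in> {1..k}"
        have "(alpha n x i - alpha n x (x v))\<^sup>2 \<le> S\<^sup>2"
          using diff[OF i xv[OF vn]] by (metis abs_ge_zero abs_le_square_iff abs_of_nonneg order_trans)
        then show "(alpha n x i - alpha n x (x v))\<^sup>2 \<le> g" using gS by (simp add: power2_eq_square)
      qed simp
      also have "\<dots> = g\<^sup>2" by (simp add: g_def gamma_def sum_distrib_right[symmetric] power2_eq_square)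
      finally show ?thesis .
    qed
    then have "(\<Sum>v<n. measure_pmf.expectation (X2 n x v) (\<lambda>y. (alpha n x y - alpha n x (x v))\<^sup>2)) \<le> (\<Sum>v<n. g\<^sup>2)"
      by (intro sum_mono) auto
    then show "(\<Sum>v<n. measure_pmf.expectation (X2 n x v) (\<lambda>y. (alpha n x y - alpha n x (x v))\<^sup>2)) \<le> real n * g\<^sup>2"
      by simp
  qed
  also have "(\<theta> / (real n * sqrt (gamma n k x)))\<^sup>2 * (real n * g\<^sup>2) = \<theta>\<^sup>2 * (S\<^sup>2 / real n)"
    using n Spos gS by (simp add: S_def[symmetric] power2_eq_square field_simps)
  finally show ?thesis by (simp add: two_choices_step_X2 S_def)
qed

lemma integrable_pmf_bounded:
  fixes f :: "'a \<Rightarrow> real"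
  assumes "\<And>x. \<bar>f x\<bar> \<le> B"
  shows "integrable (measure_pmf M) f"
  by (rule measure_pmf.integrable_const_bound[where B=B]) (use assms in auto)

lemma expectation_bind_pmf:
  fixes f :: "'b \<Rightarrow> real"
  assumes "\<And>y. \<bar>f y\<bar> \<le> B"
  shows "measure_pmf.expectation (bind_pmf M N) f = measure_pmf.expectation M (\<lambda>x. measure_pmf.expectation (N x) f)"
  unfolding measure_pmf_bind
  apply (rule integral_bind[where K="count_space UNIV" and B=B and B'=1])
  using assms by (auto intro!: measure_pmf_in_subprob_algebra)

lemma traj_length:
  "xs \<in> set_pmf (trajectory K x0 t) \<Longrightarrow> length xs = Suc t"
  by (induction t arbitrary: xs) auto

lemma traj_set:
  assumes "P x0" and pres: "\<And>x y. P x \<Longrightarrow> y \<in> set_pmf (K x) \<Longrightarrow> P y"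
  shows "xs \<in> set_pmf (trajectory K x0 t) \<Longrightarrow> (\<forall>i\<le>t. P (xs ! i))"
proof (induction t arbitrary: xs)
  case 0
  then show ?case using assms(1) by auto
next
  case (Suc t)
  then obtain ys y where ys: "ys \<in> set_pmf (trajectory K x0 t)" and y: "y \<in> set_pmf (K (last ys))"
    and xs: "xs = ys @ [y]" by auto
  have len: "length ys = Suc t" by (rule traj_length[OF ys])
  have Pys: "\<forall>i\<le>t. P (ys ! i)" by (rule Suc.IH[OF ys])
  have "last ys = ys ! t" using len last_conv_nth[of ys] by fastforce
  then have "P (last ys)" using Pys by simp
  then have Py: "P y" using pres y by blast
  show ?case
  proof (intro allI impI)
    fix i assume "i \<le> Suc t"
    then show "P (xs ! i)" using Pys Py len xs
      by (cases "i \<le> t") (auto simp: nth_append)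
  qed
qed

lemma traj_take:
  "map_pmf (take (Suc t)) (trajectory K x0 (t + m)) = trajectory K x0 t"
proof (induction m)
  case 0
  have "map_pmf (take (Suc t)) (trajectory K x0 t) = map_pmf id (trajectory K x0 t)"
    by (intro map_pmf_cong refl) (simp add: traj_length)
  then show ?case by simp
next
  case (Suc m)
  have "map_pmf (take (Suc t)) (trajectory K x0 (t + Suc m))
      = bind_pmf (trajectory K x0 (t + m)) (\<lambda>xs. map_pmf (\<lambda>y. take (Suc t) (xs @ [y])) (K (last xs)))"
    by (simp add: map_bind_pmf map_pmf_comp)
  also have "\<dots> = bind_pmf (trajectory K x0 (t + m)) (\<lambda>xs. return_pmf (take (Suc t) xs))"
  proof (intro bind_pmf_cong refl)
    fix xs assume "xs \<in> set_pmf (trajectory K x0 (t + m))"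
    then have "length xs = Suc (t + m)" by (rule traj_length)
    then have "\<And>y. take (Suc t) (xs @ [y]) = take (Suc t) xs" by simp
    then show "map_pmf (\<lambda>y. take (Suc t) (xs @ [y])) (K (last xs)) = return_pmf (take (Suc t) xs)"
      by (simp add: map_pmf_const)
  qed
  also have "\<dots> = map_pmf (take (Suc t)) (trajectory K x0 (t + m))"
    by (simp add: map_pmf_def)
  finally show ?case using Suc.IH by simp
qed

lemma E_traj_Suc:
  fixes f :: "config list \<Rightarrow> real"
  assumes "\<And>xs. \<bar>f xs\<bar> \<le> B"
  shows "measure_pmf.expectation (trajectory K x0 (Suc t)) f =
    measure_pmf.expectation (trajectory K x0 t) (\<lambda>xs. measure_pmf.expectation (K (last xs)) (\<lambda>y. f (xs @ [y])))"
  by (simp add: expectation_bind_pmf[where B=B, OF assms])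

lemma abs_expectation_le:
  fixes f :: "'a \<Rightarrow> real"
  assumes "\<And>x. \<bar>f x\<bar> \<le> B"
  shows "\<bar>measure_pmf.expectation M f\<bar> \<le> B"
proof -
  have B0: "0 \<le> B" using assms[of undefined] by linarith
  have "\<bar>measure_pmf.expectation M f\<bar> \<le> measure_pmf.expectation M (\<lambda>x. \<bar>f x\<bar>)"
    using integral_norm_bound[of M f] by simp
  also have "\<dots> \<le> measure_pmf.expectation M (\<lambda>x. B)"
    by (intro integral_mono integrable_pmf_bounded[where B=B]) (use assms B0 in auto)
  also have "\<dots> = B" by simp
  finally show ?thesis .
qed

definition Fb :: "(config \<Rightarrow> real) \<Rightarrow> real \<Rightarrow> real \<Rightarrow> nat \<Rightarrow> nat \<Rightarrow> config list \<Rightarrow> real" where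
  "Fb S S0 \<theta> \<rho> m xs = (if S0 \<le> S (xs ! \<rho>) then 1 else 0)
      * (\<Prod>s\<in>{Suc \<rho>..<\<rho> + m}. if S (xs ! s) < S0 then 1 else 0) * exp (- \<theta> * S (xs ! (\<rho> + m)))"

lemma Fb_bounds:
  assumes "\<And>x. 0 \<le> S x" "0 \<le> \<theta>"
  shows "0 \<le> Fb S S0 \<theta> \<rho> m xs" "Fb S S0 \<theta> \<rho> m xs \<le> 1"
proof -
  have p0: "0 \<le> (\<Prod>s\<in>{Suc \<rho>..<\<rho> + m}. if S (xs ! s) < S0 then 1 else (0::real))"
    by (intro prod_nonneg) auto
  have p1: "(\<Prod>s\<in>{Suc \<rho>..<\<rho> + m}. if S (xs ! s) < S0 then 1 else (0::real)) \<le> 1"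
    by (intro prod_le_1) auto
  have e1: "exp (- \<theta> * S (xs ! (\<rho> + m))) \<le> 1" using assms by (simp add: mult_nonneg_nonneg)
  show "0 \<le> Fb S S0 \<theta> \<rho> m xs" unfolding Fb_def using p0 by simp
  show "Fb S S0 \<theta> \<rho> m xs \<le> 1" unfolding Fb_def using p0 p1 e1
    by (simp add: mult_le_one)
qed

lemma Fb_abs:
  assumes "\<And>x. 0 \<le> S x" "0 \<le> \<theta>"
  shows "\<bar>Fb S S0 \<theta> \<rho> m xs\<bar> \<le> 1"
  using Fb_bounds[OF assms] by simp

lemma exp_S_abs:
  fixes S :: "'a \<Rightarrow> real" and \<theta> :: real
  assumes "\<And>x. 0 \<le> S x" "0 \<le> \<theta>"
  shows "\<bar>exp (- \<theta> * S y)\<bar> \<le> 1"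
proof -
  have "0 \<le> \<theta> * S y" using mult_nonneg_nonneg[OF assms(2) assms(1)[of y]] .
  then show ?thesis by simp
qed

lemma band:
  fixes K :: "config \<Rightarrow> config pmf"
  assumes Snn: "\<And>x. 0 \<le> S x" and th: "0 \<le> \<theta>" and P0: "P x0"
    and pres: "\<And>x y. P x \<Longrightarrow> y \<in> set_pmf (K x) \<Longrightarrow> P y"
    and L0: "0 \<le> L0"
    and H1: "\<And>x. P x \<Longrightarrow> S0 \<le> S x \<Longrightarrow> measure_pmf.expectation (K x) (\<lambda>y. exp (- \<theta> * S y)) \<le> L0"
    and H2: "\<And>x. P x \<Longrightarrow> S x < S0 \<Longrightarrow> measure_pmf.expectation (K x) (\<lambda>y. exp (- \<theta> * S y)) \<le> exp (- \<theta> * S x + Q)"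
  shows "measure_pmf.expectation (trajectory K x0 (\<rho> + Suc j)) (Fb S S0 \<theta> \<rho> (Suc j)) \<le> L0 * exp (real j * Q)"
proof (induction j)
  case 0
  let ?ind = "\<lambda>xs. (if S0 \<le> S (xs ! \<rho>) then 1 else 0::real)"
  have "measure_pmf.expectation (trajectory K x0 (\<rho> + Suc 0)) (Fb S S0 \<theta> \<rho> (Suc 0))
      = measure_pmf.expectation (trajectory K x0 \<rho>)
          (\<lambda>xs. measure_pmf.expectation (K (last xs)) (\<lambda>y. Fb S S0 \<theta> \<rho> (Suc 0) (xs @ [y])))"
    using E_traj_Suc[where B=1, OF Fb_abs[OF Snn th]] by simp
  also have "\<dots> \<le> measure_pmf.expectation (trajectory K x0 \<rho>) (\<lambda>xs. L0)"
  proof (intro integral_mono_AE AE_pmfI)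
    fix xs assume xs: "xs \<in> set_pmf (trajectory K x0 \<rho>)"
    have len: "length xs = Suc \<rho>" by (rule traj_length[OF xs])
    have last: "last xs = xs ! \<rho>" using len last_conv_nth[of xs] by fastforce
    have Pl: "P (last xs)" using traj_set[where P=P and K=K, OF P0 pres xs] last by simp
    have "measure_pmf.expectation (K (last xs)) (\<lambda>y. Fb S S0 \<theta> \<rho> (Suc 0) (xs @ [y]))
        = measure_pmf.expectation (K (last xs)) (\<lambda>y. ?ind xs * exp (- \<theta> * S y))"
      by (intro Bochner_Integration.integral_cong refl) (simp add: Fb_def len nth_append)
    also have "\<dots> = ?ind xs * measure_pmf.expectation (K (last xs)) (\<lambda>y. exp (- \<theta> * S y))"
      by simp
    also have "\<dots> \<le> L0"
      using H1[OF Pl] L0 last by auto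
    finally show "measure_pmf.expectation (K (last xs)) (\<lambda>y. Fb S S0 \<theta> \<rho> (Suc 0) (xs @ [y])) \<le> L0" .
  next
    show "integrable (measure_pmf (trajectory K x0 \<rho>))
      (\<lambda>xs. measure_pmf.expectation (K (last xs)) (\<lambda>y. Fb S S0 \<theta> \<rho> (Suc 0) (xs @ [y])))"
    proof (rule integrable_pmf_bounded[where B=1])
      fix xs
      have "\<bar>measure_pmf.expectation (K (last xs)) (\<lambda>y. Fb S S0 \<theta> \<rho> (Suc 0) (xs @ [y]))\<bar> \<le> 1"
        by (intro abs_expectation_le Fb_abs[OF Snn th])
      then show "\<bar>measure_pmf.expectation (K (last xs)) (\<lambda>y. Fb S S0 \<theta> \<rho> (Suc 0) (xs @ [y]))\<bar> \<le> 1" .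
    qed
  qed simp
  also have "\<dots> = L0" by simp
  finally show ?case by simp
next
  case (Suc j)
  let ?m = "Suc j"
  let ?G = "\<lambda>xs. (if S0 \<le> S (xs ! \<rho>) then 1 else 0::real)
      * (\<Prod>s\<in>{Suc \<rho>..<\<rho> + ?m}. if S (xs ! s) < S0 then 1 else 0)"
  let ?ind = "\<lambda>xs. (if S (xs ! (\<rho> + ?m)) < S0 then 1 else 0::real)"
  have "measure_pmf.expectation (trajectory K x0 (\<rho> + Suc ?m)) (Fb S S0 \<theta> \<rho> (Suc ?m))
      = measure_pmf.expectation (trajectory K x0 (\<rho> + ?m))
          (\<lambda>xs. measure_pmf.expectation (K (last xs)) (\<lambda>y. Fb S S0 \<theta> \<rho> (Suc ?m) (xs @ [y])))"
  proof -
    have eq: "\<rho> + Suc ?m = Suc (\<rho> + ?m)" by simp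
    show ?thesis by (subst eq, rule E_traj_Suc[where B=1, OF Fb_abs[OF Snn th]])
  qed
  also have "\<dots> \<le> measure_pmf.expectation (trajectory K x0 (\<rho> + ?m)) (\<lambda>xs. exp Q * Fb S S0 \<theta> \<rho> ?m xs)"
  proof (intro integral_mono_AE AE_pmfI)
    fix xs assume xs: "xs \<in> set_pmf (trajectory K x0 (\<rho> + ?m))"
    have len: "length xs = Suc (\<rho> + ?m)" by (rule traj_length[OF xs])
    have last: "last xs = xs ! (\<rho> + ?m)" using len last_conv_nth[of xs] by fastforce
    have Pl: "P (last xs)" using traj_set[where P=P and K=K, OF P0 pres xs] last by simp
    have G0: "0 \<le> ?G xs" by (intro mult_nonneg_nonneg prod_nonneg) auto
    have fb: "Fb S S0 \<theta> \<rho> (Suc ?m) (xs @ [y]) = ?G xs * ?ind xs * exp (- \<theta> * S y)" for y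
    proof -
      have p: "(\<Prod>s\<in>{Suc \<rho>..<\<rho> + Suc ?m}. if S ((xs @ [y]) ! s) < S0 then 1 else (0::real))
          = (\<Prod>s\<in>{Suc \<rho>..<\<rho> + ?m}. if S (xs ! s) < S0 then 1 else 0) * ?ind xs"
      proof -
        have "(\<Prod>s\<in>{Suc \<rho>..<\<rho> + Suc ?m}. if S ((xs @ [y]) ! s) < S0 then 1 else (0::real))
          = (\<Prod>s\<in>{Suc \<rho>..<\<rho> + Suc ?m}. if S (xs ! s) < S0 then 1 else (0::real))"
          by (intro prod.cong refl) (simp add: nth_append len)
        also have "\<dots> = (\<Prod>s\<in>{Suc \<rho>..<\<rho> + ?m}. if S (xs ! s) < S0 then 1 else 0) * ?ind xs"
          by (simp add: prod.atLeastLessThan_Suc del: prod.op_ivl_Suc)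
        finally show ?thesis .
      qed
      show ?thesis unfolding Fb_def using p by (simp add: nth_append len)
    qed
    have "measure_pmf.expectation (K (last xs)) (\<lambda>y. Fb S S0 \<theta> \<rho> (Suc ?m) (xs @ [y]))
        = ?G xs * ?ind xs * measure_pmf.expectation (K (last xs)) (\<lambda>y. exp (- \<theta> * S y))"
      unfolding fb by simp
    also have "\<dots> \<le> ?G xs * ?ind xs * exp (- \<theta> * S (last xs) + Q)"
      using H2[OF Pl] G0 last by (cases "S (xs ! (\<rho> + ?m)) < S0") (auto intro: mult_left_mono)
    also have "\<dots> \<le> ?G xs * exp (- \<theta> * S (last xs) + Q)"
      using G0 by (intro mult_right_mono) (auto simp: mult_le_one)
    also have "\<dots> = exp Q * Fb S S0 \<theta> \<rho> ?m xs"
    proof -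
      have e: "exp (- \<theta> * S (last xs) + Q) = exp Q * exp (- \<theta> * S (last xs))"
        by (simp add: mult_exp_exp)
      show ?thesis by (simp only: e) (simp add: Fb_def last)
    qed
    finally show "measure_pmf.expectation (K (last xs)) (\<lambda>y. Fb S S0 \<theta> \<rho> (Suc ?m) (xs @ [y]))
       \<le> exp Q * Fb S S0 \<theta> \<rho> ?m xs" .
  next
    show "integrable (measure_pmf (trajectory K x0 (\<rho> + ?m)))
      (\<lambda>xs. measure_pmf.expectation (K (last xs)) (\<lambda>y. Fb S S0 \<theta> \<rho> (Suc ?m) (xs @ [y])))"
      by (rule integrable_pmf_bounded[where B=1], intro abs_expectation_le Fb_abs[OF Snn th])
    show "integrable (measure_pmf (trajectory K x0 (\<rho> + ?m))) (\<lambda>xs. exp Q * Fb S S0 \<theta> \<rho> ?m xs)"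
      by (intro integrable_mult_right integrable_pmf_bounded[where B=1] Fb_abs[OF Snn th])
  qed
  also have "\<dots> = exp Q * measure_pmf.expectation (trajectory K x0 (\<rho> + ?m)) (Fb S S0 \<theta> \<rho> ?m)"
    by simp
  also have "\<dots> \<le> exp Q * (L0 * exp (real j * Q))"
    using Suc.IH by (intro mult_left_mono) auto
  also have "\<dots> = L0 * exp (real (Suc j) * Q)"
    by (simp add: mult_exp_exp[symmetric] algebra_simps)
  finally show ?case .
qed

lemma traj_nth0: "xs \<in> set_pmf (trajectory K x0 t) \<Longrightarrow> xs ! 0 = x0"
proof (induction t arbitrary: xs)
  case (Suc t)
  then obtain ys y where ys: "ys \<in> set_pmf (trajectory K x0 t)" and xs: "xs = ys @ [y]" by auto
  have "length ys = Suc t" by (rule traj_length[OF ys])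
  then show ?case using Suc.IH[OF ys] xs by (simp add: nth_append)
qed auto

lemma path_decomp:
  fixes S :: "config \<Rightarrow> real"
  assumes s0: "S (xs ! 0) = S0" and ss: "sstar < S0" and t: "t \<le> T" and st: "S (xs ! t) \<le> sstar"
  shows "\<exists>\<tau>\<in>{1..T}. \<exists>\<rho>\<in>{..<\<tau>}. S0 \<le> S (xs ! \<rho>) \<and> (\<forall>s. \<rho> < s \<and> s < \<tau> \<longrightarrow> S (xs ! s) < S0) \<and> S (xs ! \<tau>) \<le> sstar"
proof -
  have t0: "t \<noteq> 0" using s0 ss st by (cases "t = 0") auto
  define Q where "Q = (\<lambda>r. r < t \<and> S0 \<le> S (xs ! r))"
  have Q0: "Q 0" using t0 s0 by (simp add: Q_def)
  have bnd: "\<And>y. Q y \<Longrightarrow> y \<le> t" by (simp add: Q_def)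
  define \<rho> where "\<rho> = Greatest Q"
  have Qr: "Q \<rho>" unfolding \<rho>_def by (rule GreatestI_nat[where P=Q, OF Q0 bnd])
  have mx: "\<And>s. Q s \<Longrightarrow> s \<le> \<rho>" unfolding \<rho>_def using bnd by (metis Greatest_le_nat)
  have "\<forall>s. \<rho> < s \<and> s < t \<longrightarrow> S (xs ! s) < S0"
  proof (intro allI impI)
    fix s assume "\<rho> < s \<and> s < t"
    then show "S (xs ! s) < S0" using mx[of s] by (auto simp: Q_def not_le[symmetric])
  qed
  then show ?thesis using Qr t t0 st by (intro bexI[of _ t] bexI[of _ \<rho>]) (auto simp: Q_def)
qed

lemma generic_bound:
  fixes K :: "config \<Rightarrow> config pmf" and S :: "config \<Rightarrow> real"
  assumes Snn: "\<And>x. 0 \<le> S x" and th: "0 \<le> \<theta>" and P0: "P x0"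
    and pres: "\<And>x y. P x \<Longrightarrow> y \<in> set_pmf (K x) \<Longrightarrow> P y"
    and L0: "0 \<le> L0" and Q0: "0 \<le> Q"
    and H1: "\<And>x. P x \<Longrightarrow> S0 \<le> S x \<Longrightarrow> measure_pmf.expectation (K x) (\<lambda>y. exp (- \<theta> * S y)) \<le> L0"
    and H2: "\<And>x. P x \<Longrightarrow> S x < S0 \<Longrightarrow> measure_pmf.expectation (K x) (\<lambda>y. exp (- \<theta> * S y)) \<le> exp (- \<theta> * S x + Q)"
    and s0: "S x0 = S0" and ss: "sstar < S0"
  shows "measure_pmf.prob (trajectory K x0 T) {xs. \<exists>t\<le>T. S (xs ! t) \<le> sstar}
     \<le> real T * real T * (exp (\<theta> * sstar) * L0 * exp (real T * Q))"
proof -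
  define B where "B = (\<lambda>\<rho> \<tau>. {xs. S0 \<le> S (xs ! \<rho>) \<and> (\<forall>s. \<rho> < s \<and> s < \<tau> \<longrightarrow> S (xs ! s) < S0) \<and> S (xs ! \<tau>) \<le> sstar})"
  define c where "c = exp (\<theta> * sstar) * L0 * exp (real T * Q)"
  let ?M = "trajectory K x0 T"
  let ?A = "{xs. \<exists>t\<le>T. S (xs ! t) \<le> sstar}"
  have sub: "?A \<inter> set_pmf ?M \<subseteq> (\<Union>\<tau>\<in>{1..T}. \<Union>\<rho>\<in>{..<\<tau>}. B \<rho> \<tau>)"
  proof
    fix xs assume "xs \<in> ?A \<inter> set_pmf ?M"
    then obtain t where t: "t \<le> T" "S (xs ! t) \<le> sstar" and xs: "xs \<in> set_pmf ?M" by auto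
    have "S (xs ! 0) = S0" using traj_nth0[OF xs] s0 by simp
    from path_decomp[OF this ss t] show "xs \<in> (\<Union>\<tau>\<in>{1..T}. \<Union>\<rho>\<in>{..<\<tau>}. B \<rho> \<tau>)"
      by (auto simp: B_def)
  qed
  have trm: "measure_pmf.prob ?M (B \<rho> \<tau>) \<le> c" if "\<tau> \<in> {1..T}" "\<rho> < \<tau>" for \<rho> \<tau>
  proof -
    obtain j where j: "\<tau> = \<rho> + Suc j" using \<open>\<rho> < \<tau>\<close> less_iff_Suc_add by (metis add.commute add_Suc_right)
    have jT: "j \<le> T" using that j by auto
    have pre: "take (Suc \<tau>) -` B \<rho> \<tau> = B \<rho> \<tau>"
      unfolding B_def using \<open>\<rho> < \<tau>\<close> by (auto simp: nth_take)
    have "measure_pmf.prob ?M (B \<rho> \<tau>) = measure_pmf.prob (map_pmf (take (Suc \<tau>)) (trajectory K x0 (\<tau> + (T - \<tau>)))) (B \<rho> \<tau>)"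
      using that pre by simp
    also have "\<dots> = measure_pmf.prob (trajectory K x0 \<tau>) (B \<rho> \<tau>)"
      by (simp only: traj_take)
    also have "\<dots> = measure_pmf.expectation (trajectory K x0 \<tau>) (indicator (B \<rho> \<tau>))"
      by simp
    also have "\<dots> \<le> measure_pmf.expectation (trajectory K x0 \<tau>) (\<lambda>xs. exp (\<theta> * sstar) * Fb S S0 \<theta> \<rho> (Suc j) xs)"
    proof (rule integral_mono)
      show "integrable (measure_pmf (trajectory K x0 \<tau>)) (indicator (B \<rho> \<tau>) :: _ \<Rightarrow> real)"
        by (rule integrable_pmf_bounded[where B=1]) (simp add: indicator_def)
      show "integrable (measure_pmf (trajectory K x0 \<tau>)) (\<lambda>xs. exp (\<theta> * sstar) * Fb S S0 \<theta> \<rho> (Suc j) xs)"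
        by (intro integrable_mult_right integrable_pmf_bounded[where B=1] Fb_abs[OF Snn th])
      fix xs
      show "indicator (B \<rho> \<tau>) xs \<le> exp (\<theta> * sstar) * Fb S S0 \<theta> \<rho> (Suc j) xs"
      proof (cases "xs \<in> B \<rho> \<tau>")
        case True
        then have p: "(\<Prod>s\<in>{Suc \<rho>..<\<rho> + Suc j}. if S (xs ! s) < S0 then 1 else (0::real)) = 1"
          unfolding B_def using j by (intro prod.neutral) auto
        have "exp (\<theta> * sstar) * exp (- \<theta> * S (xs ! \<tau>)) = exp (\<theta> * (sstar - S (xs ! \<tau>)))"
          by (simp add: mult_exp_exp algebra_simps)
        also have "\<dots> \<ge> 1" using True th unfolding B_def by (simp add: mult_nonneg_nonneg)
        finally show ?thesis using True p j unfolding Fb_def B_def by simp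
      next
        case False
        then show ?thesis using Fb_bounds(1)[OF Snn th] by simp
      qed
    qed
    also have "\<dots> = exp (\<theta> * sstar) * measure_pmf.expectation (trajectory K x0 (\<rho> + Suc j)) (Fb S S0 \<theta> \<rho> (Suc j))"
      using j by simp
    also have "\<dots> \<le> exp (\<theta> * sstar) * (L0 * exp (real j * Q))"
      by (intro mult_left_mono band[where S=S and P=P and K=K and \<theta>=\<theta> and Q=Q, OF Snn th P0 pres L0 H1 H2]) auto
    also have "\<dots> \<le> c"
      unfolding c_def using jT Q0 L0 by (auto intro!: mult_left_mono mult_right_mono)
    finally show ?thesis .
  qed
  have "measure_pmf.prob ?M ?A = measure_pmf.prob ?M (?A \<inter> set_pmf ?M)"
    by (simp add: measure_Int_set_pmf)
  also have "\<dots> \<le> measure_pmf.prob ?M (\<Union>\<tau>\<in>{1..T}. \<Union>\<rho>\<in>{..<\<tau>}. B \<rho> \<tau>)"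
    by (intro measure_pmf.finite_measure_mono sub) auto
  also have "\<dots> \<le> (\<Sum>\<tau>\<in>{1..T}. measure_pmf.prob ?M (\<Union>\<rho>\<in>{..<\<tau>}. B \<rho> \<tau>))"
    by (intro measure_UNION_le) auto
  also have "\<dots> \<le> (\<Sum>\<tau>\<in>{1..T}. \<Sum>\<rho>\<in>{..<\<tau>}. measure_pmf.prob ?M (B \<rho> \<tau>))"
    by (intro sum_mono measure_UNION_le) auto
  also have "\<dots> \<le> (\<Sum>\<tau>\<in>{1..T}. \<Sum>\<rho>\<in>{..<\<tau>}. c)"
    by (intro sum_mono trm) auto
  also have "\<dots> \<le> (\<Sum>\<tau>\<in>{1..T}. real T * c)"
  proof (intro sum_mono)
    fix \<tau> assume "\<tau> \<in> {1..T}"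
    moreover have "c \<ge> 0" unfolding c_def using L0 by simp
    ultimately show "(\<Sum>\<rho>\<in>{..<\<tau>}. c) \<le> real T * c" by (simp add: mult_right_mono)
  qed
  also have "\<dots> = real T * real T * c" by simp
  finally show ?thesis by (simp add: c_def)
qed

lemma sq_trick:
  fixes p T X :: real
  assumes "0 \<le> p" "p \<le> 1" "p \<le> T * T * exp (- X)" "0 \<le> T"
  shows "p \<le> T * exp (- X / 2)"
proof -
  define u where "u = T * exp (- X / 2)"
  have u0: "0 \<le> u" using assms by (simp add: u_def)
  have "T * T * exp (- X) = u * u"
    by (simp add: u_def mult_exp_exp)
  then have pu: "p \<le> u * u" using assms by simp
  show ?thesis
  proof (cases "u \<ge> 1")
    case True then show ?thesis using assms by (simp add: u_def)
  next
    case False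
    then have "u * u \<le> u" using u0 by (simp add: mult_le_one mult_left_le)
    then show ?thesis using pu by (simp add: u_def)
  qed
qed

lemma event_conv:
  assumes c: "0 < c" "c < 1"
  shows "{xs. \<exists>t\<le>T. gamma n k (xs ! t) \<le> (1 - c) * gamma n k x0}
       = {xs. \<exists>t\<le>T. sqrt (gamma n k (xs ! t)) \<le> sqrt (1 - c) * sqrt (gamma n k x0)}"
  by (simp add: real_sqrt_mult[symmetric])

lemma prob_le1: "measure_pmf.prob M A \<le> 1" by simp

lemma maj_bound:
  fixes c :: real
  assumes c: "0 < c" "c < 1" and kn: "1 \<le> k" "k \<le> n" and v: "valid_config n k x0" and T: "0 < T"
  shows "prob_tau_le (three_majority_step n) n k c x0 T
     \<le> real T * exp (- (((1 - sqrt (1 - c)) / 2)\<^sup>2 / 32) * (real n * sqrt (gamma n k x0) / real T))"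
proof -
  have n: "n > 0" using kn by simp
  define S where "S = (\<lambda>x. sqrt (gamma n k x))"
  define S0 where "S0 = S x0"
  define \<delta> where "\<delta> = (1 - sqrt (1 - c)) / 2"
  have sq1: "sqrt (1 - c) < 1" "0 \<le> sqrt (1 - c)" using c by auto
  have d0: "0 < \<delta>" "\<delta> \<le> 1/2" using sq1 by (auto simp: \<delta>_def)
  have S0p: "0 < S0" using gamma_pos[OF n v] by (simp add: S0_def S_def)
  have Sle1: "S x \<le> 1" if "valid_config n k x" for x using gamma_le1[OF n that] by (simp add: S_def)
  have Snn: "0 \<le> S x" for x by (simp add: S_def gamma_nonneg)
  define \<theta> where "\<theta> = \<delta> * real n / (8 * real T)"
  define Q where "Q = \<theta>\<^sup>2 * (2 * S0 / real n)"
  define L0 where "L0 = exp (- \<theta> * ((1 - \<delta>) * S0))"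
  have Tr: "real T \<ge> 1" using T by simp
  have th0: "0 \<le> \<theta>" using d0 by (simp add: \<theta>_def)
  have thn: "\<theta> \<le> real n"
  proof -
    have "\<theta> \<le> \<delta> * real n / 8" unfolding \<theta>_def using d0 Tr
      by (intro divide_left_mono) auto
    also have "\<dots> \<le> real n"
    proof -
      have "\<delta> * real n \<le> 8 * real n" using d0 by (intro mult_right_mono) auto
      then show ?thesis by simp
    qed
    finally show ?thesis .
  qed
  have th2: "2 * \<theta> / real n \<le> \<delta>"
  proof -
    have "2 * \<theta> / real n = \<delta> / (4 * real T)" using n by (simp add: \<theta>_def field_simps)
    also have "\<dots> \<le> \<delta>" using d0 Tr by (simp add: divide_le_eq)
    finally show ?thesis .
  qed
  have pres: "valid_config n k y" if "valid_config n k x" "y \<in> set_pmf (three_majority_step n x)" for x y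
    using valid_Pi[OF n, of "\<lambda>v. X3 n x" k y] set_X3[OF n that(1)] that(2) by (simp add: three_majority_step_X3)
  have H1: "measure_pmf.expectation (three_majority_step n x) (\<lambda>y. exp (- \<theta> * S y)) \<le> L0"
    if vx: "valid_config n k x" and sx: "S0 \<le> S x" for x
  proof -
    have "measure_pmf.expectation (three_majority_step n x) (\<lambda>y. exp (- \<theta> * S y))
       \<le> exp (- \<theta> * S x + \<theta>\<^sup>2 * (2 * S x / real n))"
      using step3[OF n vx th0 thn] by (simp add: S_def)
    also have "\<dots> \<le> L0" unfolding L0_def
    proof (intro exp_mono)
      have "- \<theta> * S x + \<theta>\<^sup>2 * (2 * S x / real n) = - \<theta> * S x * (1 - 2 * \<theta> / real n)"
        by (simp add: power2_eq_square field_simps)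
      also have "\<dots> \<le> - \<theta> * S x * (1 - \<delta>)"
        using th2 th0 Snn[of x] by (intro mult_left_mono_neg) (auto simp: mult_nonneg_nonneg)
      also have "\<dots> \<le> - \<theta> * S0 * (1 - \<delta>)"
        using th0 sx d0 by (intro mult_right_mono mult_left_mono_neg) auto
      finally show "- \<theta> * S x + \<theta>\<^sup>2 * (2 * S x / real n) \<le> - \<theta> * ((1 - \<delta>) * S0)" by (simp add: ac_simps)
    qed
    finally show ?thesis .
  qed
  have H2: "measure_pmf.expectation (three_majority_step n x) (\<lambda>y. exp (- \<theta> * S y)) \<le> exp (- \<theta> * S x + Q)"
    if vx: "valid_config n k x" and sx: "S x < S0" for x
  proof -
    have "measure_pmf.expectation (three_majority_step n x) (\<lambda>y. exp (- \<theta> * S y))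
       \<le> exp (- \<theta> * S x + \<theta>\<^sup>2 * (2 * S x / real n))"
      using step3[OF n vx th0 thn] by (simp add: S_def)
    also have "\<dots> \<le> exp (- \<theta> * S x + Q)" unfolding Q_def
      using sx n by (intro exp_mono add_left_mono mult_left_mono divide_right_mono) auto
    finally show ?thesis .
  qed
  have ss: "sqrt (1 - c) * S0 < S0" using sq1 S0p by simp
  have main: "measure_pmf.prob (trajectory (three_majority_step n) x0 T) {xs. \<exists>t\<le>T. S (xs ! t) \<le> sqrt (1 - c) * S0}
     \<le> real T * real T * (exp (\<theta> * (sqrt (1 - c) * S0)) * L0 * exp (real T * Q))"
  proof -
    have Q0: "0 \<le> Q" using S0p by (simp add: Q_def)
    have L00: "0 \<le> L0" by (simp add: L0_def)
    show ?thesis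
      apply (rule generic_bound[where P="valid_config n k" and K="three_majority_step n" and S=S and \<theta>=\<theta> and Q=Q])
      apply (fact Snn)
      apply (fact th0)
      apply (fact v)
      apply (erule (1) pres)
      apply (fact L00)
      apply (fact Q0)
      apply (erule (1) H1)
      apply (erule (1) H2)
      apply (simp add: S0_def)
      apply (fact ss)
      done
  qed
  define X where "X = \<delta>\<^sup>2 * real n * S0 / (16 * real T)"
  have expo: "exp (\<theta> * (sqrt (1 - c) * S0)) * L0 * exp (real T * Q) \<le> exp (- X)"
  proof -
    have sqc: "sqrt (1 - c) = 1 - 2 * \<delta>" by (simp add: \<delta>_def field_simps)
    have "\<theta> * (sqrt (1 - c) * S0) + (- \<theta> * ((1 - \<delta>) * S0)) + real T * Q
        = - (3 / 32) * (\<delta>\<^sup>2 * real n * S0 / real T)"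
      unfolding sqc Q_def \<theta>_def using n T by (simp add: power2_eq_square field_simps)
    also have "\<dots> \<le> - X" unfolding X_def using d0 S0p n T
      by (simp add: field_simps)
    finally show ?thesis unfolding L0_def by (simp add: mult_exp_exp)
  qed
  have p: "prob_tau_le (three_majority_step n) n k c x0 T
      = measure_pmf.prob (trajectory (three_majority_step n) x0 T) {xs. \<exists>t\<le>T. S (xs ! t) \<le> sqrt (1 - c) * S0}"
    unfolding prob_tau_le_def event_conv[OF c] by (simp add: S_def S0_def)
  have "prob_tau_le (three_majority_step n) n k c x0 T \<le> real T * real T * exp (- X)"
    unfolding p using main expo Tr by (smt (verit) mult_left_mono mult_nonneg_nonneg of_nat_0_le_iff)
  then have "prob_tau_le (three_majority_step n) n k c x0 T \<le> real T * exp (- X / 2)"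
    by (intro sq_trick) (auto simp: prob_tau_le_def)
  also have "- X / 2 = - (\<delta>\<^sup>2 / 32) * (real n * sqrt (gamma n k x0) / real T)"
    by (simp add: X_def S0_def S_def field_simps)
  finally show ?thesis by (simp add: \<delta>_def)
qed


lemma ch_bound:
  fixes c :: real
  assumes c: "0 < c" "c < 1" and kn: "1 \<le> k" "k \<le> n" and v: "valid_config n k x0" and T: "0 < T"
  shows "prob_tau_le (two_choices_step n) n k c x0 T
     \<le> real T * exp (- (((1 - sqrt (1 - c)) / 2)\<^sup>2 / 32) * (real n / (real T + 1 / sqrt (gamma n k x0))))"
proof -
  have n: "n > 0" using kn by simp
  define S where "S = (\<lambda>x. sqrt (gamma n k x))"
  define S0 where "S0 = S x0"
  define \<delta> where "\<delta> = (1 - sqrt (1 - c)) / 2"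
  have sq1: "sqrt (1 - c) < 1" "0 \<le> sqrt (1 - c)" using c by auto
  have d0: "0 < \<delta>" "\<delta> \<le> 1/2" using sq1 by (auto simp: \<delta>_def)
  have S0p: "0 < S0" using gamma_pos[OF n v] by (simp add: S0_def S_def)
  have Sle1: "S x \<le> 1" if "valid_config n k x" for x using gamma_le1[OF n that] by (simp add: S_def)
  have Snn: "0 \<le> S x" for x by (simp add: S_def gamma_nonneg)
  define D where "D = real T * S0 + 1"
  have D1: "D \<ge> 1" using S0p by (simp add: D_def)
  define \<theta> where "\<theta> = \<delta> * real n / (8 * D)"
  define Q where "Q = \<theta>\<^sup>2 * (S0\<^sup>2 / real n)"
  define L0 where "L0 = exp (- \<theta> * ((1 - \<delta>) * S0))"
  have Tr: "real T \<ge> 1" using T by simp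
  have th0: "0 \<le> \<theta>" using d0 D1 by (simp add: \<theta>_def)
  have thd: "\<theta> / real n \<le> \<delta>"
  proof -
    have "\<theta> / real n = \<delta> / (8 * D)" using n by (simp add: \<theta>_def field_simps)
    also have "\<dots> \<le> \<delta>" using d0 D1 by (simp add: divide_le_eq)
    finally show ?thesis .
  qed
  have thn: "\<theta> \<le> real n"
  proof -
    have "\<theta> \<le> \<delta> * real n" using thd n by (simp add: divide_le_eq mult.commute)
    also have "\<dots> \<le> real n"
    proof -
      have "\<delta> * real n \<le> 1 * real n" using d0 by (intro mult_right_mono) auto
      then show ?thesis by simp
    qed
    finally show ?thesis .
  qed
  have pres: "valid_config n k y" if "valid_config n k x" "y \<in> set_pmf (two_choices_step n x)" for x y
    using valid_Pi[OF n, of "X2 n x" k y] set_X2[OF n that(1)] that(2) by (simp add: two_choices_step_X2)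
  have H1: "measure_pmf.expectation (two_choices_step n x) (\<lambda>y. exp (- \<theta> * S y)) \<le> L0"
    if vx: "valid_config n k x" and sx: "S0 \<le> S x" for x
  proof -
    have "measure_pmf.expectation (two_choices_step n x) (\<lambda>y. exp (- \<theta> * S y))
       \<le> exp (- \<theta> * S x + \<theta>\<^sup>2 * ((S x)\<^sup>2 / real n))"
      using step2[OF n vx th0 thn] by (simp add: S_def)
    also have "\<dots> \<le> L0" unfolding L0_def
    proof (intro exp_mono)
      have t: "\<theta> * S x / real n \<le> \<delta>"
      proof -
        have "\<theta> * S x / real n \<le> \<theta> * 1 / real n"
          using th0 Sle1[OF vx] n by (intro divide_right_mono mult_left_mono) auto
        then show ?thesis using thd by simp
      qed
      have "- \<theta> * S x + \<theta>\<^sup>2 * ((S x)\<^sup>2 / real n) = - \<theta> * S x * (1 - \<theta> * S x / real n)"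
        by (simp add: power2_eq_square field_simps)
      also have "\<dots> \<le> - \<theta> * S x * (1 - \<delta>)"
        using t th0 Snn[of x] by (intro mult_left_mono_neg) (auto simp: mult_nonneg_nonneg)
      also have "\<dots> \<le> - \<theta> * S0 * (1 - \<delta>)"
        using th0 sx d0 by (intro mult_right_mono mult_left_mono_neg) auto
      finally show "- \<theta> * S x + \<theta>\<^sup>2 * ((S x)\<^sup>2 / real n) \<le> - \<theta> * ((1 - \<delta>) * S0)" by (simp add: ac_simps)
    qed
    finally show ?thesis .
  qed
  have H2: "measure_pmf.expectation (two_choices_step n x) (\<lambda>y. exp (- \<theta> * S y)) \<le> exp (- \<theta> * S x + Q)"
    if vx: "valid_config n k x" and sx: "S x < S0" for x
  proof -
    have "measure_pmf.expectation (two_choices_step n x) (\<lambda>y. exp (- \<theta> * S y))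
       \<le> exp (- \<theta> * S x + \<theta>\<^sup>2 * ((S x)\<^sup>2 / real n))"
      using step2[OF n vx th0 thn] by (simp add: S_def)
    also have "\<dots> \<le> exp (- \<theta> * S x + Q)" unfolding Q_def
    proof (intro exp_mono add_left_mono mult_left_mono divide_right_mono)
      show "(S x)\<^sup>2 \<le> S0\<^sup>2" using sx Snn[of x] by (intro power_mono) auto
    qed auto
    finally show ?thesis .
  qed
  have ss: "sqrt (1 - c) * S0 < S0" using sq1 S0p by simp
  have main: "measure_pmf.prob (trajectory (two_choices_step n) x0 T) {xs. \<exists>t\<le>T. S (xs ! t) \<le> sqrt (1 - c) * S0}
     \<le> real T * real T * (exp (\<theta> * (sqrt (1 - c) * S0)) * L0 * exp (real T * Q))"
  proof -
    have Q0: "0 \<le> Q" by (simp add: Q_def)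
    have L00: "0 \<le> L0" by (simp add: L0_def)
    show ?thesis
      apply (rule generic_bound[where P="valid_config n k" and K="two_choices_step n" and S=S and \<theta>=\<theta> and Q=Q])
      apply (fact Snn)
      apply (fact th0)
      apply (fact v)
      apply (erule (1) pres)
      apply (fact L00)
      apply (fact Q0)
      apply (erule (1) H1)
      apply (erule (1) H2)
      apply (simp add: S0_def)
      apply (fact ss)
      done
  qed
  define X where "X = \<delta>\<^sup>2 * real n * S0 / (16 * D)"
  have expo: "exp (\<theta> * (sqrt (1 - c) * S0)) * L0 * exp (real T * Q) \<le> exp (- X)"
  proof -
    have sqc: "sqrt (1 - c) = 1 - 2 * \<delta>" by (simp add: \<delta>_def field_simps)
    define E where "E = \<delta>\<^sup>2 * real n * S0 / D"
    have E0: "0 \<le> E" using S0p D1 by (simp add: E_def)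
    have r: "real T * S0 / D \<le> 1" using D1 by (simp add: D_def divide_le_eq)
    have "\<theta> * (sqrt (1 - c) * S0) + (- \<theta> * ((1 - \<delta>) * S0)) + real T * Q
        = - E / 8 + E * (real T * S0 / D) / 64"
      unfolding sqc Q_def \<theta>_def E_def using n D1 by (simp add: power2_eq_square field_simps)
    also have "\<dots> \<le> - E / 8 + E * 1 / 64"
    proof -
      have "E * (real T * S0 / D) / 64 \<le> E * 1 / 64"
        using mult_left_mono[OF r E0] by (intro divide_right_mono) auto
      then show ?thesis by linarith
    qed
    also have "\<dots> \<le> - X" unfolding X_def using E0 by (simp add: E_def field_simps)
    finally show ?thesis unfolding L0_def by (simp add: mult_exp_exp)
  qed
  have p: "prob_tau_le (two_choices_step n) n k c x0 T
      = measure_pmf.prob (trajectory (two_choices_step n) x0 T) {xs. \<exists>t\<le>T. S (xs ! t) \<le> sqrt (1 - c) * S0}"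
    unfolding prob_tau_le_def event_conv[OF c] by (simp add: S_def S0_def)
  have "prob_tau_le (two_choices_step n) n k c x0 T \<le> real T * real T * exp (- X)"
    unfolding p using main expo Tr by (smt (verit) mult_left_mono mult_nonneg_nonneg of_nat_0_le_iff)
  then have "prob_tau_le (two_choices_step n) n k c x0 T \<le> real T * exp (- X / 2)"
    by (intro sq_trick) (auto simp: prob_tau_le_def)
  also have "- X / 2 = - (\<delta>\<^sup>2 / 32) * (real n / (real T + 1 / sqrt (gamma n k x0)))"
  proof -
    have "real n / (real T + 1 / S0) = real n * S0 / D" using S0p by (simp add: D_def field_simps)
    then show ?thesis by (simp add: X_def S0_def S_def field_simps)
  qed
  finally show ?thesis by (simp add: \<delta>_def)
qed

lemma prob_T0:
  assumes "gamma n k x0 > 0" "0 < c"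
  shows "prob_tau_le K n k c x0 0 = 0"
proof -
  have "{xs. \<exists>t\<le>0. gamma n k (xs ! t) \<le> (1 - c) * gamma n k x0} = {xs. gamma n k (xs ! 0) \<le> (1 - c) * gamma n k x0}"
    by auto
  moreover have "\<not> gamma n k x0 \<le> (1 - c) * gamma n k x0"
  proof -
    have cg: "0 < c * gamma n k x0" using assms by simp
    show ?thesis by (simp add: algebra_simps) (metis cg not_le)
  qed
  ultimately show ?thesis unfolding prob_tau_le_def by (simp add: measure_return)
qed

lemma final_num:
  fixes n T :: nat and Y :: real
  assumes n: "n \<ge> 1" and T: "real T \<le> real n" and Y: "Y \<ge> 11 * ln (real n)"
  shows "real T * exp (- Y) \<le> 1 * real n powr (-10)"
proof -
  have np: "real n > 0" using n by simp
  have "real T * exp (- Y) \<le> real n * exp (- (11 * ln (real n)))"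
    using T Y by (intro mult_mono) auto
  also have "exp (- (11 * ln (real n))) = real n powr (-11)"
    using np by (simp add: powr_def)
  also have "real n * real n powr (-11) = real n powr (-10)"
  proof -
    have e0: "real n powr (1 + (-11)) = real n powr 1 * real n powr (-11)" by (rule powr_add)
    have e: "real n powr (-10::real) = real n powr 1 * real n powr (-11)"
      using e0 by simp
    show ?thesis using np by (simp add: e)
  qed
  finally show ?thesis by simp
qed

lemma ln_le_2sqrt:
  assumes "x > 0"
  shows "ln x \<le> 2 * sqrt x"
proof -
  have "ln (sqrt x) \<le> sqrt x - 1" using assms by (intro ln_le_minus_one) simp
  then show ?thesis using assms by (simp add: ln_sqrt)
qed

lemma ln2_half: "ln (2::real) \<ge> 1/2"
proof -
  have "exp (1/2::real) \<le> 1 + 1/2 + (1/2)\<^sup>2" by (rule exp_bound) auto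
  also have "\<dots> \<le> 2" by (simp add: power2_eq_square)
  finally have "exp (1/2::real) \<le> 2" .
  then show ?thesis by (subst ln_ge_iff) auto
qed

lemma nat_floor_le:
  assumes "0 < nat \<lfloor>x\<rfloor>"
  shows "real (nat \<lfloor>x\<rfloor>) \<le> x" "1 \<le> x"
proof -
  have "\<lfloor>x\<rfloor> \<ge> 1" using assms by simp
  then show "1 \<le> x" by linarith
  then show "real (nat \<lfloor>x\<rfloor>) \<le> x" by (simp add: of_nat_nat)
qed

lemma part3:
  fixes a C :: real
  assumes a: "a > 0" and C: "C \<ge> 242 / a\<^sup>2"
    and kn: "1 \<le> k" "k \<le> n" and v: "valid_config n k x0"
    and g: "gamma n k x0 \<ge> C * ln (real n) / sqrt (real n)"
    and T: "0 < nat \<lfloor>C * ln (real n) / gamma n k x0\<rfloor>"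
  shows "real (nat \<lfloor>C * ln (real n) / gamma n k x0\<rfloor>) \<le> real n"
    and "a * (real n * sqrt (gamma n k x0) / real (nat \<lfloor>C * ln (real n) / gamma n k x0\<rfloor>)) \<ge> 11 * ln (real n)"
proof -
  have n: "n > 0" using kn by simp
  define L where "L = ln (real n)"
  define G where "G = gamma n k x0"
  define r where "r = sqrt (real n)"
  define Tn where "Tn = nat \<lfloor>C * L / G\<rfloor>"
  have Gp: "G > 0" using gamma_pos[OF n v] by (simp add: G_def)
  have rp: "r > 0" using n by (simp add: r_def)
  have Cp: "C > 0" using C a by (smt (verit) divide_pos_pos zero_less_power)
  have TnP: "0 < Tn" using T by (simp add: Tn_def L_def G_def)
  have Tle: "real Tn \<le> C * L / G" and one: "1 \<le> C * L / G"
    using nat_floor_le[OF TnP[unfolded Tn_def]] by (auto simp: Tn_def)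
  have Lp: "L > 0"
  proof (rule ccontr)
    assume "\<not> L > 0"
    then have "C * L \<le> 0" using Cp by (simp add: mult_nonpos_nonneg mult_le_0_iff)
    then have "C * L / G \<le> 0" using Gp by (simp add: divide_nonpos_pos)
    then show False using one by simp
  qed
  have gG: "G \<ge> C * L / r" using g by (simp add: G_def L_def r_def)
  have CLr: "C * L \<le> r * G" using gG rp by (simp add: field_simps)
  have rn: "r \<le> real n"
  proof -
    have r1: "1 \<le> r" using n by (simp add: r_def)
    have "r * 1 \<le> r * r" using r1 rp by (intro mult_left_mono) auto
    also have "r * r = real n" by (simp add: r_def)
    finally show ?thesis by simp
  qed
  have "C * L / G \<le> r" using CLr Gp by (simp add: divide_le_eq mult.commute)
  then show "real (nat \<lfloor>C * ln (real n) / gamma n k x0\<rfloor>) \<le> real n"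
    using Tle rn by (simp add: Tn_def L_def G_def)
  have Lr: "L \<le> 2 * r" using ln_le_2sqrt[of "real n"] n by (simp add: L_def r_def)
  define Z where "Z = a * real n * sqrt G * G / (C * L)"
  have Z0: "Z \<ge> 0" using a Gp Cp Lp by (simp add: Z_def)
  have YZ: "a * (real n * sqrt G / real Tn) \<ge> Z"
  proof -
    have "1 / real Tn \<ge> G / (C * L)"
      using Tle TnP Gp Cp Lp by (simp add: field_simps)
    then have "a * (real n * sqrt G) * (1 / real Tn) \<ge> a * (real n * sqrt G) * (G / (C * L))"
      using a n Gp by (intro mult_left_mono) auto
    then show ?thesis by (simp add: Z_def)
  qed
  have Z2: "Z\<^sup>2 \<ge> (11 * L)\<^sup>2"
  proof -
    have sG: "(sqrt G)\<^sup>2 = G" using Gp by simp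
    have n2: "real n * real n = r ^ 4" using n by (simp add: r_def power4_eq_xxxx)
    have "Z\<^sup>2 = a\<^sup>2 * (real n * real n) * G ^ 3 / (C * L)\<^sup>2"
      unfolding Z_def using sG by (simp add: power2_eq_square power3_eq_cube field_simps)
    also have "\<dots> \<ge> a\<^sup>2 * (real n * real n) * (C * L / r) ^ 3 / (C * L)\<^sup>2"
      using gG Cp Lp rp a by (intro divide_right_mono mult_left_mono power_mono) auto
    also have "a\<^sup>2 * (real n * real n) * (C * L / r) ^ 3 / (C * L)\<^sup>2 = (a\<^sup>2 * C) * L * r"
      unfolding n2 using Cp Lp rp by (simp add: power2_eq_square power3_eq_cube power4_eq_xxxx field_simps)
    also have "(a\<^sup>2 * C) * L * r \<ge> 242 * L * (L / 2)"
    proof -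
      have aC: "a\<^sup>2 * C \<ge> 242" using C a by (simp add: field_simps)
      have "242 * L * (L / 2) \<le> (a\<^sup>2 * C) * L * (L / 2)" using aC Lp by (intro mult_right_mono) auto
      also have "\<dots> \<le> (a\<^sup>2 * C) * L * r" using aC Lp Lr by (intro mult_left_mono) auto
      finally show ?thesis .
    qed
    finally show ?thesis by (simp add: power2_eq_square)
  qed
  have "Z \<ge> 11 * L" using power2_le_imp_le[OF Z2 Z0] .
  then show "a * (real n * sqrt (gamma n k x0) / real (nat \<lfloor>C * ln (real n) / gamma n k x0\<rfloor>)) \<ge> 11 * ln (real n)"
    using YZ by (simp add: Tn_def L_def G_def)
qed

lemma part4:
  fixes a C :: real
  assumes a: "a > 0" and C: "C \<ge> 22 / a + 2"
    and kn: "1 \<le> k" "k \<le> n" and v: "valid_config n k x0"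
    and g: "gamma n k x0 \<ge> (C * ln (real n))\<^sup>2 / real n"
    and T: "0 < nat \<lfloor>C * ln (real n) / gamma n k x0\<rfloor>"
  shows "real (nat \<lfloor>C * ln (real n) / gamma n k x0\<rfloor>) \<le> real n"
    and "a * (real n / (real (nat \<lfloor>C * ln (real n) / gamma n k x0\<rfloor>) + 1 / sqrt (gamma n k x0))) \<ge> 11 * ln (real n)"
proof -
  have n: "n > 0" using kn by simp
  define L where "L = ln (real n)"
  define G where "G = gamma n k x0"
  define Tn where "Tn = nat \<lfloor>C * L / G\<rfloor>"
  have Gp: "G > 0" using gamma_pos[OF n v] by (simp add: G_def)
  have C2: "C \<ge> 2" using C a by (smt (verit) divide_pos_pos)
  have Cp: "C > 0" using C2 by simp
  have aC: "a * C \<ge> 22"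
  proof -
    have "a * C \<ge> a * (22 / a + 2)" using C a by (intro mult_left_mono) auto
    also have "a * (22 / a + 2) = 22 + 2 * a" using a by (simp add: field_simps)
    finally show ?thesis using a by simp
  qed
  have TnP: "0 < Tn" using T by (simp add: Tn_def L_def G_def)
  have Tle: "real Tn \<le> C * L / G" and one: "1 \<le> C * L / G"
    using nat_floor_le[OF TnP[unfolded Tn_def]] by (auto simp: Tn_def)
  have Lp: "L > 0"
  proof (rule ccontr)
    assume "\<not> L > 0"
    then have "C * L \<le> 0" using Cp by (simp add: mult_nonpos_nonneg mult_le_0_iff)
    then have "C * L / G \<le> 0" using Gp by (simp add: divide_nonpos_pos)
    then show False using one by simp
  qed
  have n2: "real n \<ge> 2"
  proof (rule ccontr)
    assume "\<not> real n \<ge> 2"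
    then have "n = 1" using n by linarith
    then show False using Lp by (simp add: L_def)
  qed
  have L2: "L \<ge> 1/2"
  proof -
    have "ln (2::real) \<le> ln (real n)" using n2 by (subst ln_le_cancel_iff) auto
    then show ?thesis using ln2_half by (simp add: L_def)
  qed
  have CL1: "C * L \<ge> 1"
  proof -
    have "C * L \<ge> 2 * (1/2)" using C2 L2 by (intro mult_mono) auto
    then show ?thesis by simp
  qed
  have gG: "G \<ge> (C * L)\<^sup>2 / real n" using g by (simp add: G_def L_def)
  have CLpos: "(C * L)\<^sup>2 / real n > 0"
  proof -
    have "C * L > 0" using CL1 by simp
    then show ?thesis using n by (intro divide_pos_pos) auto
  qed
  have "C * L / G \<le> C * L / ((C * L)\<^sup>2 / real n)"
  proof (rule divide_left_mono)
    show "(C * L)\<^sup>2 / real n \<le> G" by (rule gG)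
    show "0 \<le> C * L" using CL1 by simp
    show "0 < G * ((C * L)\<^sup>2 / real n)" using Gp CLpos by (rule mult_pos_pos)
  qed
  also have "\<dots> = real n / (C * L)" using CL1 n by (simp add: power2_eq_square field_simps)
  finally have Tn_le: "real Tn \<le> real n / (C * L)" using Tle by linarith
  have nCL: "real n / (C * L) \<le> real n" using CL1 n by (simp add: divide_le_eq mult_le_cancel_left1)
  show "real (nat \<lfloor>C * ln (real n) / gamma n k x0\<rfloor>) \<le> real n"
    using Tn_le nCL by (simp add: Tn_def L_def G_def)
  define r where "r = sqrt (real n)"
  have rp: "r > 0" using n by (simp add: r_def)
  have rn: "r \<le> real n"
  proof -
    have r1: "1 \<le> r" using n by (simp add: r_def)
    have "r * 1 \<le> r * r" using r1 rp by (intro mult_left_mono) auto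
    also have "r * r = real n" by (simp add: r_def)
    finally show ?thesis by simp
  qed
  have sG: "sqrt G \<ge> C * L / r"
  proof -
    have "sqrt ((C * L)\<^sup>2 / real n) \<le> sqrt G" using gG by simp
    moreover have "sqrt ((C * L)\<^sup>2 / real n) = C * L / r"
      using CL1 by (simp add: r_def real_sqrt_divide)
    ultimately show ?thesis by simp
  qed
  have CLrp: "C * L / r > 0" using CL1 rp by simp
  have isG: "1 / sqrt G \<le> real n / (C * L)"
  proof -
    have "1 / sqrt G \<le> 1 / (C * L / r)"
    proof (rule divide_left_mono)
      show "C * L / r \<le> sqrt G" by (rule sG)
      show "0 < sqrt G * (C * L / r)" using Gp CLrp by (intro mult_pos_pos) auto
    qed simp
    also have "\<dots> = r / (C * L)" by simp
    also have "\<dots> \<le> real n / (C * L)" using rn CL1 by (intro divide_right_mono) auto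
    finally show ?thesis .
  qed
  have den_pos: "real Tn + 1 / sqrt G > 0"
  proof -
    have "1 / sqrt G > 0" using Gp by simp
    then show ?thesis by (simp add: add_nonneg_pos)
  qed
  have den: "real Tn + 1 / sqrt G \<le> 2 * real n / (C * L)" using Tn_le isG by simp
  have "a * (real n / (real Tn + 1 / sqrt G)) \<ge> a * (real n / (2 * real n / (C * L)))"
  proof (intro mult_left_mono divide_left_mono)
    have "0 < 2 * real n / (C * L)" using n CL1 by simp
    then show "0 < (2 * real n / (C * L)) * (real Tn + 1 / sqrt G)" using den_pos by (rule mult_pos_pos)
  qed (use den a in auto)
  also have "a * (real n / (2 * real n / (C * L))) = (a * C) * L / 2" using n CL1 by (simp add: field_simps)
  also have "(a * C) * L / 2 \<ge> 22 * L / 2" using aC Lp by (intro divide_right_mono mult_right_mono) auto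
  finally show "a * (real n / (real (nat \<lfloor>C * ln (real n) / gamma n k x0\<rfloor>) + 1 / sqrt (gamma n k x0))) \<ge> 11 * ln (real n)"
    by (simp add: Tn_def L_def G_def)
qed

theorem lemma4p7:
  fixes c\<gamma> :: real
  assumes "0 < c\<gamma>" "c\<gamma> < 1"
  shows
   "(\<exists>a>0. \<forall>n k opn0 (T::nat). 1 \<le> k \<and> k \<le> n \<and> valid_config n k opn0 \<and> 0 < T \<longrightarrow>
       prob_tau_le (three_majority_step n) n k c\<gamma> opn0 T
         \<le> real T * exp (- a * (real n * sqrt (gamma n k opn0) / real T)))
  \<and> (\<exists>a>0. \<forall>n k opn0 (T::nat). 1 \<le> k \<and> k \<le> n \<and> valid_config n k opn0 \<and> 0 < T \<longrightarrow>
       prob_tau_le (two_choices_step n) n k c\<gamma> opn0 T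
         \<le> real T * exp (- a * (real n / (real T + 1 / sqrt (gamma n k opn0)))))
  \<and> (\<exists>C0. \<forall>C\<ge>C0. \<exists>D>0. \<forall>n k opn0. 1 \<le> k \<and> k \<le> n \<and> valid_config n k opn0 \<and>
         gamma n k opn0 \<ge> C * ln (real n) / sqrt (real n) \<longrightarrow>
       prob_tau_le (three_majority_step n) n k c\<gamma> opn0
           (nat \<lfloor>C * ln (real n) / gamma n k opn0\<rfloor>)
         \<le> D * real n powr (-10))
  \<and> (\<exists>C0. \<forall>C\<ge>C0. \<exists>D>0. \<forall>n k opn0. 1 \<le> k \<and> k \<le> n \<and> valid_config n k opn0 \<and>
         gamma n k opn0 \<ge> (C * ln (real n))\<^sup>2 / real n \<longrightarrow>
       prob_tau_le (two_choices_step n) n k c\<gamma> opn0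
           (nat \<lfloor>C * ln (real n) / gamma n k opn0\<rfloor>)
         \<le> D * real n powr (-10))"

proof -
  define a0 where "a0 = ((1 - sqrt (1 - c\<gamma>)) / 2)\<^sup>2 / 32"
  have a0p: "a0 > 0"
  proof -
    have "sqrt (1 - c\<gamma>) < 1" using assms by simp
    then show ?thesis by (simp add: a0_def)
  qed
  have P1: "\<exists>a>0. \<forall>n k opn0 (T::nat). 1 \<le> k \<and> k \<le> n \<and> valid_config n k opn0 \<and> 0 < T \<longrightarrow>
       prob_tau_le (three_majority_step n) n k c\<gamma> opn0 T
         \<le> real T * exp (- a * (real n * sqrt (gamma n k opn0) / real T))"
    using maj_bound[OF assms] a0p unfolding a0_def by blast
  have P2: "\<exists>a>0. \<forall>n k opn0 (T::nat). 1 \<le> k \<and> k \<le> n \<and> valid_config n k opn0 \<and> 0 < T \<longrightarrow>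
       prob_tau_le (two_choices_step n) n k c\<gamma> opn0 T
         \<le> real T * exp (- a * (real n / (real T + 1 / sqrt (gamma n k opn0))))"
    using ch_bound[OF assms] a0p unfolding a0_def by blast
  have P3: "\<exists>C0. \<forall>C\<ge>C0. \<exists>D>0. \<forall>n k opn0. 1 \<le> k \<and> k \<le> n \<and> valid_config n k opn0 \<and>
         gamma n k opn0 \<ge> C * ln (real n) / sqrt (real n) \<longrightarrow>
       prob_tau_le (three_majority_step n) n k c\<gamma> opn0
           (nat \<lfloor>C * ln (real n) / gamma n k opn0\<rfloor>)
         \<le> D * real n powr (-10)"
  proof (rule exI[of _ "242 / a0\<^sup>2"], intro allI impI)
    fix C :: real
    assume C: "242 / a0\<^sup>2 \<le> C"
    show "\<exists>D>0. \<forall>n k opn0. 1 \<le> k \<and> k \<le> n \<and> valid_config n k opn0 \<and>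
         gamma n k opn0 \<ge> C * ln (real n) / sqrt (real n) \<longrightarrow>
       prob_tau_le (three_majority_step n) n k c\<gamma> opn0
           (nat \<lfloor>C * ln (real n) / gamma n k opn0\<rfloor>)
         \<le> D * real n powr (-10)"
    proof (rule exI[of _ "1::real"], intro conjI allI impI)
    fix n k opn0
    assume h: "1 \<le> k \<and> k \<le> n \<and> valid_config n k opn0 \<and> C * ln (real n) / sqrt (real n) \<le> gamma n k opn0"
    then have kn: "1 \<le> k" "k \<le> n" and v: "valid_config n k opn0"
      and g: "C * ln (real n) / sqrt (real n) \<le> gamma n k opn0" by auto
    have n: "n > 0" using kn by simp
    show "prob_tau_le (three_majority_step n) n k c\<gamma> opn0 (nat \<lfloor>C * ln (real n) / gamma n k opn0\<rfloor>)
         \<le> 1 * real n powr (-10)"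
    proof (cases "nat \<lfloor>C * ln (real n) / gamma n k opn0\<rfloor> = 0")
      case True
      then show ?thesis using prob_T0[OF gamma_pos[OF n v] assms(1)] by simp
    next
      case False
      then have T: "0 < nat \<lfloor>C * ln (real n) / gamma n k opn0\<rfloor>" by simp
      have "prob_tau_le (three_majority_step n) n k c\<gamma> opn0 (nat \<lfloor>C * ln (real n) / gamma n k opn0\<rfloor>)
          \<le> real (nat \<lfloor>C * ln (real n) / gamma n k opn0\<rfloor>) * exp (- (a0 * (real n * sqrt (gamma n k opn0) / real (nat \<lfloor>C * ln (real n) / gamma n k opn0\<rfloor>))))"
        using maj_bound[OF assms kn v T] by (simp add: a0_def)
      also have "\<dots> \<le> 1 * real n powr (-10)"
        by (intro final_num part3[OF a0p C kn v g T]) (use n in simp)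
      finally show ?thesis .
    qed
    qed simp
  qed
  have P4: "\<exists>C0. \<forall>C\<ge>C0. \<exists>D>0. \<forall>n k opn0. 1 \<le> k \<and> k \<le> n \<and> valid_config n k opn0 \<and>
         gamma n k opn0 \<ge> (C * ln (real n))\<^sup>2 / real n \<longrightarrow>
       prob_tau_le (two_choices_step n) n k c\<gamma> opn0
           (nat \<lfloor>C * ln (real n) / gamma n k opn0\<rfloor>)
         \<le> D * real n powr (-10)"
  proof (rule exI[of _ "22 / a0 + 2"], intro allI impI)
    fix C :: real
    assume C: "22 / a0 + 2 \<le> C"
    show "\<exists>D>0. \<forall>n k opn0. 1 \<le> k \<and> k \<le> n \<and> valid_config n k opn0 \<and>
         gamma n k opn0 \<ge> (C * ln (real n))\<^sup>2 / real n \<longrightarrow>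
       prob_tau_le (two_choices_step n) n k c\<gamma> opn0
           (nat \<lfloor>C * ln (real n) / gamma n k opn0\<rfloor>)
         \<le> D * real n powr (-10)"
    proof (rule exI[of _ "1::real"], intro conjI allI impI)
    fix n k opn0
    assume h: "1 \<le> k \<and> k \<le> n \<and> valid_config n k opn0 \<and> (C * ln (real n))\<^sup>2 / real n \<le> gamma n k opn0"
    then have kn: "1 \<le> k" "k \<le> n" and v: "valid_config n k opn0"
      and g: "(C * ln (real n))\<^sup>2 / real n \<le> gamma n k opn0" by auto
    have n: "n > 0" using kn by simp
    show "prob_tau_le (two_choices_step n) n k c\<gamma> opn0 (nat \<lfloor>C * ln (real n) / gamma n k opn0\<rfloor>)
         \<le> 1 * real n powr (-10)"
    proof (cases "nat \<lfloor>C * ln (real n) / gamma n k opn0\<rfloor> = 0")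
      case True
      then show ?thesis using prob_T0[OF gamma_pos[OF n v] assms(1)] by simp
    next
      case False
      then have T: "0 < nat \<lfloor>C * ln (real n) / gamma n k opn0\<rfloor>" by simp
      have "prob_tau_le (two_choices_step n) n k c\<gamma> opn0 (nat \<lfloor>C * ln (real n) / gamma n k opn0\<rfloor>)
          \<le> real (nat \<lfloor>C * ln (real n) / gamma n k opn0\<rfloor>) * exp (- (a0 * (real n / (real (nat \<lfloor>C * ln (real n) / gamma n k opn0\<rfloor>) + 1 / sqrt (gamma n k opn0)))))"
        using ch_bound[OF assms kn v T] by (simp add: a0_def)
      also have "\<dots> \<le> 1 * real n powr (-10)"
        by (intro final_num part4[OF a0p C kn v g T]) (use n in simp)
      finally show ?thesis .
    qed
    qed simp
  qed
  show ?thesis using P1 P2 P3 P4 by blast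
qed

end
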